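(* Let $V=\mathbb R^{p,q}$, let $W$ be a $C\ell^0(V)$-module, let $\Pi:\wedge^2W\to V$ be an $\mathfrak o(V)$-equivariant linear map, and let $p=p'+p''$ with $p'\equiv 3\pmod 4$. Then: (1) If $(\tilde e_1,\dots,\tilde e_{p'})$ is an orthonormal basis of $E$ with $\tilde e_1\wedge\cdots\wedge\tilde e_{p'}=\pm e_1\wedge\cdots\wedge e_{p'}$, then $b_{\Pi,(\tilde e_i)}=\pm b$; in particular $b_{\Pi,(\tilde e_i)}=b$ for every positively oriented orthonormal basis of $E$. (2) $b$ is symmetric. (3) $b$ is invariant under the group $K(p',p'')=\mathrm{Spin}(p')\cdot\mathrm{Spin}_0(p'',q)$. (4) Under the identification $\mathfrak o(V)=\wedge^2V=\wedge^2E\oplus\wedge^2E'\oplus E\wedge E'$, every element of $E\wedge E'$ acts on $W$ by a $b$-symmetric endomorphism, and every element of $\wedge^2E\oplus\wedge^2E'\cong\mathfrak o(p')\oplus\mathfrak o(p'',q)$ acts on $W$ by a $b$-skew-symmetric endomorphism.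
   Context: Let $V=\mathbb{R}^{p,q}$ be $\mathbb R^{p+q}$ with the scalar product $\langle x,y\rangle=\sum_{i=1}^{p}x^iy^i-\sum_{j=p+1}^{p+q}x^jy^j$ and its standard orthonormal basis. The Clifford algebra $C\ell(V)=C\ell_{p,q}$ is the associative algebra generated by $V$ subject to $xy+yx=-2\langle x,y\rangle 1$; it is $\mathbb{Z}_2$-graded, $C\ell(V)=C\ell^0(V)\oplus C\ell^1(V)$. $\mathrm{Pin}(V)$ is the group generated by unit vectors ($\langle x,x\rangle=\pm1$), $\mathrm{Spin}(V)=\mathrm{Pin}(V)\cap C\ell^0(V)$, $\mathrm{Spin}_0(V)$ its identity component, and $\mathrm{Ad}(x)y=xyx^{-1}$. Identify $\mathfrak{o}(V)=\wedge^2V$ via $(x\wedge y)(z)=\langle y,z\rangle x-\langle x,z\rangle y$; the map $x\wedge y\mapsto-\frac14(xy-yx)$ is a Lie algebra isomorphism of $\mathfrak o(V)$ onto $\mathfrak{spin}(V)\subset C\ell^0(V)$, and via it $\mathfrak o(V)$ acts on any $C\ell^0(V)$-module $W$; "$\mathfrak o(V)$-equivariant" refers to this action. Fix a decomposition $p=p'+p''$ with $p'\equiv 3\pmod 4$. Let $e_1,\dots,e_{p'}$ be the first $p'$ standard basis vectors, spanning $E=\mathbb R^{p',0}$, and $e'_1,\dots,e'_{p''+q}$ the remaining ones, spanning $E'=E^\perp\cong\mathbb R^{p'',q}$. For an orthonormal basis $(\tilde e_i)$ of $E$ set $b_{\Pi,(\tilde e_i)}(s,t)=\langle\tilde e_1,\Pi(\tilde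 e_2\cdots\tilde e_{p'}s\wedge t)\rangle$ for $s,t\in W$ (Clifford product acting on $W$), and $b=b(\Pi)=b_{\Pi,(e_i)}$, the canonical symmetric bilinear form. $K(p',p'')=\mathrm{Spin}(p')\cdot\mathrm{Spin}_0(p'',q)\subset\mathrm{Spin}_0(p,q)$ denotes the connected subgroup generated by $\mathrm{Spin}(E)$ and $\mathrm{Spin}_0(E')$. *)

theory Defs
  imports "HOL-Analysis.Analysis"
begin

text \<open>Vectors of V = R^{p,q} are functions nat => real supported in {..<p+q}
  (index i corresponds to the (i+1)-st standard basis vector).
  Elements of the Clifford algebra Cl_{p,q} are coefficient functions on blades
  e_A (A a finite subset of {..<p+q}, factors in increasing order).\<close>

type_synonym vec = "nat \<Rightarrow> real"
type_synonym cl = "nat set \<Rightarrow> real"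

definition ip :: "nat \<Rightarrow> nat \<Rightarrow> vec \<Rightarrow> vec \<Rightarrow> real" where
  "ip p q x y = (\<Sum>i<p. x i * y i) - (\<Sum>i\<in>{p..<p+q}. x i * y i)"

definition in_V :: "nat \<Rightarrow> vec \<Rightarrow> bool" where
  "in_V n x \<longleftrightarrow> (\<forall>i\<ge>n. x i = 0)"

definition std_basis :: "nat \<Rightarrow> vec" where
  "std_basis i = (\<lambda>k. if k = i then 1 else 0)"

text \<open>e_i e_i = - <e_i,e_i> (convention xy + yx = -2<x,y>).\<close>
definition cl_sq :: "nat \<Rightarrow> nat \<Rightarrow> real" where
  "cl_sq p i = (if i < p then -1 else 1)"

definition blade_sign :: "nat \<Rightarrow> nat set \<Rightarrow> nat set \<Rightarrow> real" where
  "blade_sign p A B =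
     (-1) ^ card {(a,b). a \<in> A \<and> b \<in> B \<and> b < a} * (\<Prod>i\<in>A \<inter> B. cl_sq p i)"

definition clmul :: "nat \<Rightarrow> nat \<Rightarrow> cl \<Rightarrow> cl \<Rightarrow> cl" where
  "clmul p q x y = (\<lambda>C. \<Sum>A\<in>Pow {..<p+q}. \<Sum>B\<in>Pow {..<p+q}.
      if (A - B) \<union> (B - A) = C then blade_sign p A B * x A * y B else 0)"

definition cl_one :: cl where
  "cl_one = (\<lambda>A. if A = {} then 1 else 0)"

definition clvec :: "nat \<Rightarrow> nat \<Rightarrow> vec \<Rightarrow> cl" where
  "clvec p q v = (\<lambda>A. if \<exists>i<p+q. A = {i} then v (the_elem A) else 0)"

definition clprod :: "nat \<Rightarrow> nat \<Rightarrow> vec list \<Rightarrow> cl" where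
  "clprod p q vs = foldr (clmul p q) (map (clvec p q) vs) cl_one"

definition cl_even :: "nat \<Rightarrow> nat \<Rightarrow> cl set" where
  "cl_even p q = {x. \<forall>A. x A \<noteq> 0 \<longrightarrow> A \<subseteq> {..<p+q} \<and> even (card A)}"

definition cl0_module :: "nat \<Rightarrow> nat \<Rightarrow> (cl \<Rightarrow> 'w::real_vector \<Rightarrow> 'w) \<Rightarrow> bool" where
  "cl0_module p q \<rho> \<longleftrightarrow>
     (\<forall>x\<in>cl_even p q. linear (\<rho> x)) \<and>
     (\<forall>x\<in>cl_even p q. \<forall>y\<in>cl_even p q. \<forall>a::real.
        \<rho> (\<lambda>A. a * x A + y A) = (\<lambda>w. a *\<^sub>R \<rho> x w + \<rho> y w)) \<and>
     \<rho> cl_one = id \<and>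
     (\<forall>x\<in>cl_even p q. \<forall>y\<in>cl_even p q. \<rho> (clmul p q x y) = \<rho> x \<circ> \<rho> y)"

text \<open>A bivector \<Sum>_{i,j<p+q} c i j e_i \<and> e_j of o(V) = \<and>^2 V, its image
  -1/4 \<Sum> c i j (e_i e_j - e_j e_i) in spin(V), and its action on V.\<close>
definition spin_elt :: "nat \<Rightarrow> nat \<Rightarrow> (nat \<Rightarrow> nat \<Rightarrow> real) \<Rightarrow> cl" where
  "spin_elt p q c = (\<lambda>A. - (1/4) * (\<Sum>i<p+q. \<Sum>j<p+q. c i j *
      (clmul p q (clvec p q (std_basis i)) (clvec p q (std_basis j)) A
       - clmul p q (clvec p q (std_basis j)) (clvec p q (std_basis i)) A)))"

definition so_act_V :: "nat \<Rightarrow> nat \<Rightarrow> (nat \<Rightarrow> nat \<Rightarrow> real) \<Rightarrow> vec \<Rightarrow> vec" where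
  "so_act_V p q c z = (\<lambda>k. \<Sum>i<p+q. \<Sum>j<p+q. c i j *
      (ip p q (std_basis j) z * std_basis i k - ip p q (std_basis i) z * std_basis j k))"

text \<open>A linear map \<Pi> : \<and>^2 W -> V, encoded by the skew bilinear map (s,t) |-> \<Pi>(s \<and> t),
  which is o(V)-equivariant.\<close>
definition equivariant_pairing ::
  "nat \<Rightarrow> nat \<Rightarrow> (cl \<Rightarrow> 'w::real_vector \<Rightarrow> 'w) \<Rightarrow> ('w \<Rightarrow> 'w \<Rightarrow> vec) \<Rightarrow> bool" where
  "equivariant_pairing p q \<rho> Pr \<longleftrightarrow>
     (\<forall>s t. in_V (p+q) (Pr s t)) \<and>
     (\<forall>k. bilinear (\<lambda>s t. Pr s t k)) \<and>
     (\<forall>s t k. Pr s t k = - Pr t s k) \<and>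
     (\<forall>c s t. so_act_V p q c (Pr s t) =
        (\<lambda>k. Pr (\<rho> (spin_elt p q c) s) t k + Pr s (\<rho> (spin_elt p q c) t) k))"

text \<open>b_{Pr,(es)}(s,t) = < es_1, \<Pi>(es_2 ... es_{p'} s \<and> t) >, with es indexed from 0.\<close>
definition b_gen :: "nat \<Rightarrow> nat \<Rightarrow> nat \<Rightarrow> (cl \<Rightarrow> 'w::real_vector \<Rightarrow> 'w) \<Rightarrow> ('w \<Rightarrow> 'w \<Rightarrow> vec)
    \<Rightarrow> (nat \<Rightarrow> vec) \<Rightarrow> 'w \<Rightarrow> 'w \<Rightarrow> real" where
  "b_gen p q p' \<rho> Pr es s t =
     ip p q (es 0) (Pr (\<rho> (clprod p q (map es [1..<p'])) s) t)"

definition b_can :: "nat \<Rightarrow> nat \<Rightarrow> nat \<Rightarrow> (cl \<Rightarrow> 'w::real_vector \<Rightarrow> 'w) \<Rightarrow> ('w \<Rightarrow> 'w \<Rightarrow> vec)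
    \<Rightarrow> 'w \<Rightarrow> 'w \<Rightarrow> real" where
  "b_can p q p' \<rho> Pr = b_gen p q p' \<rho> Pr std_basis"

definition subE :: "nat \<Rightarrow> vec set" where
  "subE p' = {x. \<forall>i\<ge>p'. x i = 0}"

definition subE' :: "nat \<Rightarrow> nat \<Rightarrow> vec set" where
  "subE' p' n = {x. in_V n x \<and> (\<forall>i<p'. x i = 0)}"

definition onb_E :: "nat \<Rightarrow> nat \<Rightarrow> nat \<Rightarrow> (nat \<Rightarrow> vec) \<Rightarrow> bool" where
  "onb_E p q p' es \<longleftrightarrow> (\<forall>i<p'. es i \<in> subE p') \<and>
     (\<forall>i<p'. \<forall>j<p'. ip p q (es i) (es j) = (if i = j then 1 else 0))"

text \<open>Pin(S): group generated by unit vectors of S (every unit vector's inverse is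
  again +- a unit vector, so this is the set of finite products of unit vectors).\<close>
definition pin_grp :: "nat \<Rightarrow> nat \<Rightarrow> vec set \<Rightarrow> cl set" where
  "pin_grp p q S = {clprod p q xs | xs. \<forall>x\<in>set xs. x \<in> S \<and> (ip p q x x = 1 \<or> ip p q x x = -1)}"

definition spin_grp :: "nat \<Rightarrow> nat \<Rightarrow> vec set \<Rightarrow> cl set" where
  "spin_grp p q S = pin_grp p q S \<inter> cl_even p q"

text \<open>Identity component (product topology on cl, i.e. the Euclidean topology on
  the finite-dimensional algebra).\<close>
definition spin0_grp :: "nat \<Rightarrow> nat \<Rightarrow> vec set \<Rightarrow> cl set" where
  "spin0_grp p q S = connected_component_set (spin_grp p q S) cl_one"

definition gen_grp :: "nat \<Rightarrow> nat \<Rightarrow> cl set \<Rightarrow> cl set" where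
  "gen_grp p q G = {foldr (clmul p q) gs cl_one | gs. \<forall>g\<in>set gs. g \<in> G \<or>
      (\<exists>h\<in>G. clmul p q h g = cl_one \<and> clmul p q g h = cl_one)}"

definition K_grp :: "nat \<Rightarrow> nat \<Rightarrow> nat \<Rightarrow> cl set" where
  "K_grp p q p' = gen_grp p q (spin_grp p q (subE p') \<union> spin0_grp p q (subE' p' (p+q)))"

end

theory Submission
  imports Defs
begin

definition sgnf :: "nat set \<Rightarrow> nat set \<Rightarrow> real" where
  "sgnf A B = (\<Prod>a\<in>A. \<Prod>b\<in>B. if b < a then -1 else 1)"

lemma prod_if_pm: "finite B \<Longrightarrow> (\<Prod>b\<in>B. if P b then (-1::real) else 1) = (-1) ^ card {b\<in>B. P b}"
  by (simp add: prod.If_cases Int_def)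

lemma inv_sign:
  assumes "finite A" "finite B"
  shows "(-1::real) ^ card {(a,b). a\<in>A \<and> b\<in>B \<and> b<a} = sgnf A B"
proof -
  have "{(a,b). a\<in>A \<and> b\<in>B \<and> b<a} = Sigma A (\<lambda>a. {b\<in>B. b<a})" by auto
  then have "card {(a,b). a\<in>A \<and> b\<in>B \<and> b<a} = (\<Sum>a\<in>A. card {b\<in>B. b<a})"
    using assms by (simp add: card_SigmaI)
  then show ?thesis using assms
    by (simp add: sgnf_def power_sum prod_if_pm)
qed

lemma prod_symdiff:
  fixes f :: "nat \<Rightarrow> real"
  assumes "finite A" "finite B" "\<And>x. f x * f x = 1"
  shows "prod f ((A-B) \<union> (B-A)) = prod f A * prod f B"
proof -
  have d: "prod f ((A-B) \<union> (B-A)) = prod f (A-B) * prod f (B-A)"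
    using assms by (subst prod.union_disjoint) auto
  have a: "prod f A = prod f (A\<inter>B) * prod f (A-B)"
    using assms(1) by (rule prod.Int_Diff)
  have b: "prod f B = prod f (A\<inter>B) * prod f (B-A)"
    using prod.Int_Diff[OF assms(2), of f A] by (simp add: Int_commute)
  have c: "prod f (A\<inter>B) * prod f (A\<inter>B) = 1"
    by (simp add: prod.distrib[symmetric] assms(3))
  have "prod f A * prod f B = (prod f (A\<inter>B) * prod f (A\<inter>B)) * (prod f (A-B) * prod f (B-A))"
    unfolding a b by (simp only: mult_ac)
  then show ?thesis unfolding d c by simp
qed

lemma sgnf_sd1:
  assumes "finite A" "finite B" "finite C"
  shows "sgnf ((A-B) \<union> (B-A)) C = sgnf A C * sgnf B C"
proof -
  have "(\<Prod>b\<in>C. if b < x then -1 else 1) * (\<Prod>b\<in>C. if b < x then -1 else 1) = (1::real)" for x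
    unfolding prod.distrib[symmetric] by (rule prod.neutral) simp
  then show ?thesis unfolding sgnf_def by (rule prod_symdiff[OF assms(1,2)])
qed

lemma sgnf_sd2:
  assumes "finite A" "finite B" "finite C"
  shows "sgnf A ((B-C) \<union> (C-B)) = sgnf A B * sgnf A C"
  unfolding sgnf_def prod.distrib[symmetric]
  by (rule prod.cong[OF refl], rule prod_symdiff) (use assms in simp_all)

lemma bs_eq: "finite A \<Longrightarrow> finite B \<Longrightarrow> blade_sign p A B = sgnf A B * (\<Prod>i\<in>A \<inter> B. cl_sq p i)"
  unfolding blade_sign_def by (simp add: inv_sign)

lemma cl_sq_sq: "cl_sq p i * cl_sq p i = 1" by (simp add: cl_sq_def)

lemma cocycle:
  assumes "finite A" "finite B" "finite C"
  shows "blade_sign p A B * blade_sign p ((A-B)\<union>(B-A)) C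
       = blade_sign p B C * blade_sign p A ((B-C)\<union>(C-B))"
proof -
  define Q where "Q = (\<lambda>X. (\<Prod>i\<in>X. cl_sq p i))"
  have Q: "Q X * Q Y = Q ((X-Y)\<union>(Y-X))" if "finite X" "finite Y" for X Y
    using prod_symdiff[OF that cl_sq_sq] unfolding Q_def by simp
  have fin: "finite ((A-B)\<union>(B-A))" "finite ((B-C)\<union>(C-B))" using assms by auto
  have s1: "((A\<inter>B) - (((A-B)\<union>(B-A)) \<inter> C)) \<union> ((((A-B)\<union>(B-A)) \<inter> C) - (A\<inter>B))
     = ((B\<inter>C) - (A \<inter> ((B-C)\<union>(C-B)))) \<union> ((A \<inter> ((B-C)\<union>(C-B))) - (B\<inter>C))" by blast
  have q: "Q (A\<inter>B) * Q (((A-B)\<union>(B-A)) \<inter> C) = Q (B\<inter>C) * Q (A \<inter> ((B-C)\<union>(C-B)))"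
    using assms by (simp add: Q s1)
  have g1: "sgnf ((A-B)\<union>(B-A)) C = sgnf A C * sgnf B C" using assms by (rule sgnf_sd1)
  have g2: "sgnf A ((B-C)\<union>(C-B)) = sgnf A B * sgnf A C" using assms by (rule sgnf_sd2)
  have "blade_sign p A B * blade_sign p ((A-B)\<union>(B-A)) C
     = (sgnf A B * sgnf ((A-B)\<union>(B-A)) C) * (Q (A\<inter>B) * Q (((A-B)\<union>(B-A)) \<inter> C))"
    using assms fin by (simp add: bs_eq Q_def)
  also have "\<dots> = (sgnf B C * sgnf A ((B-C)\<union>(C-B))) * (Q (B\<inter>C) * Q (A \<inter> ((B-C)\<union>(C-B))))"
    unfolding q g1 g2 by (simp only: mult_ac)
  also have "\<dots> = blade_sign p B C * blade_sign p A ((B-C)\<union>(C-B))"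
    using assms fin by (simp add: bs_eq Q_def)
  finally show ?thesis .
qed


abbreviation sd :: "nat set \<Rightarrow> nat set \<Rightarrow> nat set" where "sd A B \<equiv> (A-B)\<union>(B-A)"

lemma sd_in: "A \<in> Pow X \<Longrightarrow> B \<in> Pow X \<Longrightarrow> sd A B \<in> Pow X" by auto

lemma clmul_alt:
  assumes "C \<in> Pow {..<p+q}"
  shows "clmul p q x y C = (\<Sum>A\<in>Pow {..<p+q}. blade_sign p A (sd A C) * x A * y (sd A C))"
  unfolding clmul_def
proof (rule sum.cong[OF refl])
  fix A assume A: "A \<in> Pow {..<p+q}"
  have eq: "((A - B) \<union> (B - A) = C) = (B = sd A C)" for B by blast
  have "sd A C \<in> Pow {..<p+q}" using A assms by auto
  then show "(\<Sum>B\<in>Pow {..<p+q}. if (A - B) \<union> (B - A) = C then blade_sign p A B * x A * y B else 0) =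
        blade_sign p A (sd A C) * x A * y (sd A C)"
    unfolding eq by (simp add: sum.delta')
qed

lemma clmul_out: "C \<notin> Pow {..<p+q} \<Longrightarrow> clmul p q x y C = 0"
  unfolding clmul_def by (auto intro!: sum.neutral)

lemma sd_sd[simp]: "sd A (sd A B) = B" by blast

lemma sum_reindex_sd:
  assumes "A \<in> Pow X"
  shows "(\<Sum>C\<in>Pow X. g C) = (\<Sum>B\<in>Pow X. g (sd A B))"
  by (rule sum.reindex_bij_witness[where i="sd A" and j="sd A"]) (use assms in auto)

lemma clmul_assoc: "clmul p q (clmul p q x y) z = clmul p q x (clmul p q y z)"
proof
  fix D
  show "clmul p q (clmul p q x y) z D = clmul p q x (clmul p q y z) D"
  proof (cases "D \<in> Pow {..<p+q}")
    case False then show ?thesis by (simp add: clmul_out)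
  next
    case D: True
    let ?U = "Pow {..<p+q}"
    have fin: "finite X" if "X \<in> ?U" for X using that finite_subset by auto
    have "clmul p q (clmul p q x y) z D
       = (\<Sum>C\<in>?U. \<Sum>A\<in>?U. blade_sign p C (sd C D) * (blade_sign p A (sd A C) * x A * y (sd A C)) * z (sd C D))"
      unfolding clmul_alt[OF D]
    proof (rule sum.cong[OF refl])
      fix C assume C: "C \<in> ?U"
      show "blade_sign p C (sd C D) * clmul p q x y C * z (sd C D) =
         (\<Sum>A\<in>?U. blade_sign p C (sd C D) * (blade_sign p A (sd A C) * x A * y (sd A C)) * z (sd C D))"
        unfolding clmul_alt[OF C] sum_distrib_left sum_distrib_right ..
    qed
    also have "\<dots> = (\<Sum>A\<in>?U. \<Sum>C\<in>?U. blade_sign p C (sd C D) * (blade_sign p A (sd A C) * x A * y (sd A C)) * z (sd C D))"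
      by (rule sum.swap)
    also have "\<dots> = (\<Sum>A\<in>?U. \<Sum>B\<in>?U. blade_sign p (sd A B) (sd (sd A B) D) * (blade_sign p A (sd A (sd A B)) * x A * y (sd A (sd A B))) * z (sd (sd A B) D))"
      by (rule sum.cong[OF refl], rule sum_reindex_sd)
    also have "\<dots> = (\<Sum>A\<in>?U. \<Sum>B\<in>?U. blade_sign p A (sd A D) * x A * (blade_sign p B (sd B (sd A D)) * y B * z (sd B (sd A D))))"
    proof (intro sum.cong[OF refl])
      fix A B assume A: "A \<in> ?U" and B: "B \<in> ?U"
      have e1: "sd A (sd A B) = B" by blast
      have e2: "sd (sd A B) D = sd B (sd A D)" by blast
      have e3: "sd B (sd B (sd A D)) = sd A D" by blast
      have cc: "blade_sign p A B * blade_sign p (sd A B) (sd B (sd A D)) = blade_sign p B (sd B (sd A D)) * blade_sign p A (sd A D)"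
        using cocycle[OF fin[OF A] fin[OF B], of "sd B (sd A D)" p] fin A B D e3 by auto
      show "blade_sign p (sd A B) (sd (sd A B) D) * (blade_sign p A (sd A (sd A B)) * x A * y (sd A (sd A B))) * z (sd (sd A B) D)
         = blade_sign p A (sd A D) * x A * (blade_sign p B (sd B (sd A D)) * y B * z (sd B (sd A D)))"
        unfolding e1 e2 using cc by (simp add: mult_ac)
    qed
    also have "\<dots> = clmul p q x (clmul p q y z) D"
      unfolding clmul_alt[OF D]
    proof (rule sum.cong[OF refl])
      fix A assume A: "A \<in> ?U"
      have C: "sd A D \<in> ?U" using A D by auto
      show "(\<Sum>B\<in>?U. blade_sign p A (sd A D) * x A * (blade_sign p B (sd B (sd A D)) * y B * z (sd B (sd A D)))) =
         blade_sign p A (sd A D) * x A * clmul p q y z (sd A D)"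
        unfolding clmul_alt[OF C] sum_distrib_left ..
    qed
    finally show ?thesis .
  qed
qed


definition sm :: "real \<Rightarrow> cl \<Rightarrow> cl" where "sm c x = (\<lambda>A. c * x A)"
definition ad :: "cl \<Rightarrow> cl \<Rightarrow> cl" where "ad x y = (\<lambda>A. x A + y A)"
definition bl :: "nat set \<Rightarrow> cl" where "bl A = (\<lambda>B. if B = A then 1 else 0)"
definition hom :: "nat \<Rightarrow> nat \<Rightarrow> cl \<Rightarrow> nat \<Rightarrow> bool" where
  "hom p q x k \<longleftrightarrow> (\<forall>A. x A \<noteq> 0 \<longrightarrow> A \<subseteq> {..<p+q} \<and> even (card A + k))"

lemma clmul_sm_left: "clmul p q (sm c x) y = sm c (clmul p q x y)"
  unfolding clmul_def sm_def by (simp add: sum_distrib_left mult_ac if_distrib cong: if_cong)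
lemma clmul_sm_right: "clmul p q x (sm c y) = sm c (clmul p q x y)"
  unfolding clmul_def sm_def by (simp add: sum_distrib_left mult_ac if_distrib cong: if_cong)
lemma clmul_ad_left: "clmul p q (ad x y) z = ad (clmul p q x z) (clmul p q y z)"
  unfolding clmul_def ad_def by (simp add: sum.distrib[symmetric] algebra_simps if_distrib cong: if_cong)
lemma clmul_ad_right: "clmul p q x (ad y z) = ad (clmul p q x y) (clmul p q x z)"
  unfolding clmul_def ad_def by (simp add: sum.distrib[symmetric] algebra_simps if_distrib cong: if_cong)

lemma sm_sm[simp]: "sm a (sm b x) = sm (a*b) x" unfolding sm_def by (simp add: mult_ac)
lemma sm_1[simp]: "sm 1 x = x" unfolding sm_def by simp

lemma card_sd: "finite A \<Longrightarrow> finite C \<Longrightarrow> card (sd A C) + 2 * card (A \<inter> C) = card A + card C"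
proof -
  assume f: "finite A" "finite C"
  have "card (sd A C) = card (A - C) + card (C - A)" using f by (subst card_Un_disjoint) auto
  moreover have "card A = card (A - C) + card (A \<inter> C)"
  proof -
    have "A = (A - C) \<union> (A \<inter> C)" by blast
    then have "card A = card ((A - C) \<union> (A \<inter> C))" by simp
    also have "\<dots> = card (A - C) + card (A \<inter> C)" using f by (intro card_Un_disjoint) auto
    finally show ?thesis .
  qed
  moreover have "card C = card (C - A) + card (A \<inter> C)"
  proof -
    have "C = (C - A) \<union> (A \<inter> C)" by blast
    then have "card C = card ((C - A) \<union> (A \<inter> C))" by simp
    also have "\<dots> = card (C - A) + card (A \<inter> C)" using f by (intro card_Un_disjoint) auto
    finally show ?thesis .
  qed
  ultimately show ?thesis by simp
qed

lemma hom_clmul: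
  assumes "hom p q x a" "hom p q y b"
  shows "hom p q (clmul p q x y) (a + b)"
  unfolding hom_def
proof (intro allI impI)
  fix C assume nz: "clmul p q x y C \<noteq> 0"
  have C: "C \<in> Pow {..<p+q}"
  proof (rule ccontr)
    assume "C \<notin> Pow {..<p+q}"
    then have "clmul p q x y C = 0" by (rule clmul_out)
    then show False using nz by simp
  qed
  have "(\<Sum>A\<in>Pow {..<p+q}. blade_sign p A (sd A C) * x A * y (sd A C)) \<noteq> 0"
    using nz unfolding clmul_alt[OF C] .
  then obtain A where A: "A \<in> Pow {..<p+q}" "blade_sign p A (sd A C) * x A * y (sd A C) \<noteq> 0"
    by (rule sum.not_neutral_contains_not_neutral)
  then have "x A \<noteq> 0" "y (sd A C) \<noteq> 0" by auto
  then have e: "even (card A + a)" "even (card (sd A C) + b)" using assms unfolding hom_def by auto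
  have "finite A" "finite C" using A C finite_subset by auto
  then have "card (sd A C) + 2 * card (A \<inter> C) = card A + card C" by (rule card_sd)
  then have eq: "card C + (a+b) + (card A + a) = (card (sd A C) + b) + 2*(card(A\<inter>C) + a)" by simp
  have "even ((card (sd A C) + b) + 2*(card(A\<inter>C) + a))" using e(2) by simp
  then have "even (card C + (a + b) + (card A + a))" unfolding eq .
  then have "even (card C + (a + b))" using e(1) even_add by blast
  then show "C \<subseteq> {..<p+q} \<and> even (card C + (a + b))" using C by auto
qed

lemma hom_mod: "hom p q x a \<Longrightarrow> a mod 2 = b mod 2 \<Longrightarrow> hom p q x b"
  unfolding hom_def by (metis even_add even_iff_mod_2_eq_zero)

lemma cl_even_hom: "x \<in> cl_even p q \<longleftrightarrow> hom p q x 0"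
  unfolding cl_even_def hom_def by auto

lemma hom_sm: "hom p q x a \<Longrightarrow> hom p q (sm c x) a" unfolding hom_def sm_def by auto
lemma hom_ad: "hom p q x a \<Longrightarrow> hom p q y a \<Longrightarrow> hom p q (ad x y) a"
  unfolding hom_def ad_def
proof (intro allI impI)
  fix A assume h: "\<forall>A. x A \<noteq> 0 \<longrightarrow> A \<subseteq> {..<p + q} \<and> even (card A + a)" "\<forall>A. y A \<noteq> 0 \<longrightarrow> A \<subseteq> {..<p + q} \<and> even (card A + a)"
    and "x A + y A \<noteq> 0"
  then have "x A \<noteq> 0 \<or> y A \<noteq> 0" by auto
  then show "A \<subseteq> {..<p + q} \<and> even (card A + a)" using h by blast
qed
lemma hom_zero: "hom p q (\<lambda>A. 0) a" unfolding hom_def by auto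
lemma hom_one: "hom p q cl_one 0" unfolding hom_def cl_one_def by auto
lemma hom_clvec: "hom p q (clvec p q v) 1"
  unfolding hom_def clvec_def
proof (intro allI impI)
  fix A assume "(if \<exists>i<p + q. A = {i} then v (the_elem A) else 0) \<noteq> 0"
  then obtain i where "i < p+q" "A = {i}" by (auto split: if_splits)
  then show "A \<subseteq> {..<p + q} \<and> even (card A + 1)" by simp
qed
lemma hom_sum: "finite I \<Longrightarrow> (\<And>i. i \<in> I \<Longrightarrow> hom p q (f i) a) \<Longrightarrow> hom p q (\<lambda>A. \<Sum>i\<in>I. f i A) a"
proof (induction I rule: finite_induct)
  case empty then show ?case by (simp add: hom_zero)
next
  case (insert x F)
  have "(\<lambda>A. \<Sum>i\<in>insert x F. f i A) = ad (f x) (\<lambda>A. \<Sum>i\<in>F. f i A)"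
    using insert by (simp add: ad_def)
  then show ?case using insert by (simp add: hom_ad)
qed

lemma hom_clprod: "hom p q (clprod p q vs) (length vs)"
proof (induction vs)
  case Nil then show ?case by (simp add: clprod_def hom_one)
next
  case (Cons v vs)
  have "clprod p q (v # vs) = clmul p q (clvec p q v) (clprod p q vs)" by (simp add: clprod_def)
  then show ?case using hom_clmul[OF hom_clvec Cons.IH] by simp
qed

lemma hom_supp: "hom p q x a \<Longrightarrow> x A \<noteq> 0 \<Longrightarrow> A \<in> Pow {..<p+q}" unfolding hom_def by auto

lemma clmul_one_left: assumes "hom p q x a" shows "clmul p q cl_one x = x"
proof
  fix C show "clmul p q cl_one x C = x C"
  proof (cases "C \<in> Pow {..<p+q}")
    case True
    have "clmul p q cl_one x C = (\<Sum>A\<in>Pow {..<p+q}. if A = {} then x C else 0)"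
      unfolding clmul_alt[OF True] by (rule sum.cong) (auto simp: cl_one_def blade_sign_def)
    also have "\<dots> = x C" by (simp add: sum.delta)
    finally show ?thesis .
  next
    case False then show ?thesis using clmul_out hom_supp[OF assms] by metis
  qed
qed

lemma clmul_one_right: assumes "hom p q x a" shows "clmul p q x cl_one = x"
proof
  fix C show "clmul p q x cl_one C = x C"
  proof (cases "C \<in> Pow {..<p+q}")
    case True
    have "clmul p q x cl_one C = (\<Sum>A\<in>Pow {..<p+q}. if A = C then x C else 0)"
      unfolding clmul_alt[OF True] by (rule sum.cong) (auto simp: cl_one_def blade_sign_def)
    also have "\<dots> = x C" using True by (simp add: sum.delta)
    finally show ?thesis .
  next
    case False then show ?thesis using clmul_out hom_supp[OF assms] by metis
  qed
qed

lemma clmul_bl: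
  assumes "A \<in> Pow {..<p+q}" "B \<in> Pow {..<p+q}"
  shows "clmul p q (bl A) (bl B) = sm (blade_sign p A B) (bl (sd A B))"
proof
  fix C show "clmul p q (bl A) (bl B) C = sm (blade_sign p A B) (bl (sd A B)) C"
  proof (cases "C \<in> Pow {..<p+q}")
    case True
    have "clmul p q (bl A) (bl B) C = (\<Sum>A'\<in>Pow {..<p+q}. if A' = A then blade_sign p A (sd A C) * bl B (sd A C) else 0)"
      unfolding clmul_alt[OF True] by (rule sum.cong) (auto simp: bl_def)
    also have "\<dots> = blade_sign p A (sd A C) * bl B (sd A C)" using assms by (simp add: sum.delta)
    also have "\<dots> = sm (blade_sign p A B) (bl (sd A B)) C"
    proof -
      have "(sd A C = B) = (C = sd A B)" by blast
      then show ?thesis unfolding bl_def sm_def by auto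
    qed
    finally show ?thesis .
  next
    case False
    then have "sd A B \<noteq> C" using assms by auto
    then show ?thesis using False by (simp add: clmul_out bl_def sm_def)
  qed
qed


lemma if_sum_distrib: "(if P then a * (\<Sum>i\<in>I. g i) else 0) = (\<Sum>i\<in>I. if P then a * g i else (0::real))"
  by (simp add: sum_distrib_left)

lemma clmul_sum_right:
  assumes "finite I"
  shows "clmul p q x (\<lambda>A. \<Sum>i\<in>I. f i A) = (\<lambda>C. \<Sum>i\<in>I. clmul p q x (f i) C)"
proof
  fix C
  let ?U = "Pow {..<p+q}"
  have "clmul p q x (\<lambda>A. \<Sum>i\<in>I. f i A) C = (\<Sum>A\<in>?U. \<Sum>B\<in>?U. \<Sum>i\<in>I. if sd A B = C then blade_sign p A B * x A * f i B else 0)"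
    unfolding clmul_def by (intro sum.cong refl) (simp add: if_sum_distrib)
  also have "\<dots> = (\<Sum>A\<in>?U. \<Sum>i\<in>I. \<Sum>B\<in>?U. if sd A B = C then blade_sign p A B * x A * f i B else 0)"
    by (intro sum.cong refl, rule sum.swap)
  also have "\<dots> = (\<Sum>i\<in>I. \<Sum>A\<in>?U. \<Sum>B\<in>?U. if sd A B = C then blade_sign p A B * x A * f i B else 0)"
    by (rule sum.swap)
  finally show "clmul p q x (\<lambda>A. \<Sum>i\<in>I. f i A) C = (\<Sum>i\<in>I. clmul p q x (f i) C)"
    unfolding clmul_def .
qed

lemma clmul_sum_left:
  assumes "finite I"
  shows "clmul p q (\<lambda>A. \<Sum>i\<in>I. f i A) y = (\<lambda>C. \<Sum>i\<in>I. clmul p q (f i) y C)"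
proof
  fix C
  let ?U = "Pow {..<p+q}"
  have e: "(if P then a * (\<Sum>i\<in>I. g i) * c else 0) = (\<Sum>i\<in>I. if P then a * g i * c else (0::real))" for P a c g
    by (simp add: sum_distrib_left sum_distrib_right)
  have "clmul p q (\<lambda>A. \<Sum>i\<in>I. f i A) y C = (\<Sum>A\<in>?U. \<Sum>B\<in>?U. \<Sum>i\<in>I. if sd A B = C then blade_sign p A B * f i A * y B else 0)"
    unfolding clmul_def by (intro sum.cong refl) (simp only: e)
  also have "\<dots> = (\<Sum>A\<in>?U. \<Sum>i\<in>I. \<Sum>B\<in>?U. if sd A B = C then blade_sign p A B * f i A * y B else 0)"
    by (intro sum.cong refl, rule sum.swap)
  also have "\<dots> = (\<Sum>i\<in>I. \<Sum>A\<in>?U. \<Sum>B\<in>?U. if sd A B = C then blade_sign p A B * f i A * y B else 0)"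
    by (rule sum.swap)
  finally show "clmul p q (\<lambda>A. \<Sum>i\<in>I. f i A) y C = (\<Sum>i\<in>I. clmul p q (f i) y C)"
    unfolding clmul_def .
qed

lemma bl_empty: "bl {} = cl_one" unfolding bl_def cl_one_def by auto

lemma clvec_std: "k < p+q \<Longrightarrow> clvec p q (std_basis k) = bl {k}"
  unfolding clvec_def bl_def std_basis_def by (rule ext) auto

lemma clvec_sum: "clvec p q v = (\<lambda>A. \<Sum>i<p+q. v i * bl {i} A)"
proof
  fix A
  show "clvec p q v A = (\<Sum>i<p+q. v i * bl {i} A)"
  proof (cases "\<exists>i<p+q. A = {i}")
    case True
    then obtain i where i: "i < p+q" "A = {i}" by blast
    have "(\<Sum>j<p+q. v j * bl {j} A) = (\<Sum>j<p+q. if j = i then v i else 0)"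
      by (rule sum.cong) (auto simp: bl_def i)
    also have "\<dots> = v i" using i by simp
    finally show ?thesis using i by (simp add: clvec_def)
  next
    case False
    then have "\<And>j. j < p+q \<Longrightarrow> bl {j} A = 0" by (auto simp: bl_def)
    then show ?thesis using False by (auto simp: clvec_def)
  qed
qed

lemma bs_single: "blade_sign p {i} {j} = (if i = j then cl_sq p i else if j < i then -1 else 1)"
proof -
  have "{(a, b). a \<in> {i} \<and> b \<in> {j} \<and> b < a} = (if j < i then {(i,j)} else {})" by auto
  then show ?thesis unfolding blade_sign_def by auto
qed

lemma ee_anti_bl:
  assumes "i < p+q" "j < p+q"
  shows "(\<lambda>C. clmul p q (bl {i}) (bl {j}) C + clmul p q (bl {j}) (bl {i}) C)
        = (\<lambda>C. if i = j then 2 * cl_sq p i * cl_one C else 0)"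
proof -
  have "clmul p q (bl {i}) (bl {j}) = sm (blade_sign p {i} {j}) (bl (sd {i} {j}))"
    using assms by (intro clmul_bl) auto
  moreover have "clmul p q (bl {j}) (bl {i}) = sm (blade_sign p {j} {i}) (bl (sd {j} {i}))"
    using assms by (intro clmul_bl) auto
  moreover have "sd {j} {i} = sd {i} {j}" by blast
  moreover have "i = j \<Longrightarrow> sd {i} {j} = {}" by auto
  ultimately show ?thesis
    by (auto simp: bs_single sm_def bl_empty)
qed

lemma ip_as_clsq: "ip p q v w = - (\<Sum>i<p+q. cl_sq p i * v i * w i)"
proof -
  have "(\<Sum>i<p+q. cl_sq p i * v i * w i) = (\<Sum>i<p. cl_sq p i * v i * w i) + (\<Sum>i\<in>{p..<p+q}. cl_sq p i * v i * w i)"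
    by (metis (no_types, lifting) add_0 le_add1 lessThan_atLeast0 sum.atLeastLessThan_concat)
  also have "\<dots> = - (\<Sum>i<p. v i * w i) + (\<Sum>i\<in>{p..<p+q}. v i * w i)"
    by (simp add: cl_sq_def sum_negf)
  finally show ?thesis unfolding ip_def by simp
qed

lemma clvec_mul_sum: "clmul p q (clvec p q v) (clvec p q w) = (\<lambda>C. \<Sum>i<p+q. \<Sum>j<p+q. v i * w j * clmul p q (bl {i}) (bl {j}) C)"
proof -
  have a: "clmul p q (\<lambda>A. v i * bl {i} A) (\<lambda>A. w j * bl {j} A) C = v i * w j * clmul p q (bl {i}) (bl {j}) C" for i j C
    using clmul_sm_left[of p q "v i" "bl {i}"] clmul_sm_right[of p q "bl {i}" "w j" "bl {j}"]
    unfolding sm_def by simp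
  show ?thesis
    unfolding clvec_sum clmul_sum_left[OF finite_lessThan] clmul_sum_right[OF finite_lessThan] a ..
qed

lemma vec_anti:
  "(\<lambda>C. clmul p q (clvec p q v) (clvec p q w) C + clmul p q (clvec p q w) (clvec p q v) C)
   = sm (-2 * ip p q v w) cl_one"
proof
  fix C
  let ?I = "{..<p+q}"
  have R: "clmul p q (clvec p q w) (clvec p q v) C = (\<Sum>i\<in>?I. \<Sum>j\<in>?I. v i * w j * clmul p q (bl {j}) (bl {i}) C)"
    unfolding clvec_mul_sum by (subst sum.swap) (simp add: mult_ac)
  have "clmul p q (clvec p q v) (clvec p q w) C + clmul p q (clvec p q w) (clvec p q v) C
      = (\<Sum>i\<in>?I. \<Sum>j\<in>?I. v i * w j * (clmul p q (bl {i}) (bl {j}) C + clmul p q (bl {j}) (bl {i}) C))"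
    unfolding R unfolding clvec_mul_sum by (simp add: sum.distrib[symmetric] distrib_left)
  also have "\<dots> = (\<Sum>i\<in>?I. \<Sum>j\<in>?I. if j = i then v i * w i * (2 * cl_sq p i * cl_one C) else 0)"
  proof (intro sum.cong refl)
    fix i j assume "i \<in> ?I" "j \<in> ?I"
    then show "v i * w j * (clmul p q (bl {i}) (bl {j}) C + clmul p q (bl {j}) (bl {i}) C) = (if j = i then v i * w i * (2 * cl_sq p i * cl_one C) else 0)"
      using fun_cong[OF ee_anti_bl[of i p q j], of C] by auto
  qed
  also have "\<dots> = (\<Sum>i\<in>?I. v i * w i * (2 * cl_sq p i * cl_one C))" by simp
  also have "\<dots> = sm (-2 * ip p q v w) cl_one C"
    unfolding ip_as_clsq sm_def by (simp add: sum_distrib_left sum_distrib_right mult_ac sum_negf)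
  finally show "clmul p q (clvec p q v) (clvec p q w) C + clmul p q (clvec p q w) (clvec p q v) C = sm (-2 * ip p q v w) cl_one C" .
qed

lemma vec_sq: "clmul p q (clvec p q v) (clvec p q v) = sm (- ip p q v v) cl_one"
proof
  fix C
  have "clmul p q (clvec p q v) (clvec p q v) C + clmul p q (clvec p q v) (clvec p q v) C = sm (-2 * ip p q v v) cl_one C"
    using fun_cong[OF vec_anti[of p q v v], of C] by (simp only:)
  then show "clmul p q (clvec p q v) (clvec p q v) C = sm (- ip p q v v) cl_one C"
    unfolding sm_def by linarith
qed

lemma vec_anti_orth: "ip p q v w = 0 \<Longrightarrow> clmul p q (clvec p q v) (clvec p q w) = sm (-1) (clmul p q (clvec p q w) (clvec p q v))"
proof
  fix C assume "ip p q v w = 0"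
  then show "clmul p q (clvec p q v) (clvec p q w) C = sm (-1) (clmul p q (clvec p q w) (clvec p q v)) C"
  proof -
    have "clmul p q (clvec p q v) (clvec p q w) C + clmul p q (clvec p q w) (clvec p q v) C = sm (-2 * ip p q v w) cl_one C"
      using fun_cong[OF vec_anti[of p q v w], of C] by (simp only:)
    then show ?thesis using \<open>ip p q v w = 0\<close> unfolding sm_def by simp
  qed
qed

lemma ip_std: "k < p+q \<Longrightarrow> ip p q (std_basis k) z = - cl_sq p k * z k"
proof -
  assume k: "k < p+q"
  have "(\<Sum>i<p+q. cl_sq p i * std_basis k i * z i) = (\<Sum>i<p+q. if i = k then cl_sq p k * z k else 0)"
    by (rule sum.cong) (auto simp: std_basis_def)
  then show ?thesis unfolding ip_as_clsq using k by simp
qed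

lemma ip_std2: "k < p+q \<Longrightarrow> ip p q z (std_basis k) = - cl_sq p k * z k"
proof -
  assume k: "k < p+q"
  have "(\<Sum>i<p+q. cl_sq p i * z i * std_basis k i) = (\<Sum>i<p+q. if i = k then cl_sq p k * z k else 0)"
    by (rule sum.cong) (auto simp: std_basis_def)
  then show ?thesis unfolding ip_as_clsq using k by simp
qed


abbreviation ev :: "nat \<Rightarrow> cl" where "ev k \<equiv> bl {k}"

lemma hom_bl: "A \<subseteq> {..<p+q} \<Longrightarrow> even (card A + a) \<Longrightarrow> hom p q (bl A) a"
  unfolding hom_def bl_def by auto

lemma hom_ev: "k < p+q \<Longrightarrow> hom p q (ev k) 1"
  by (rule hom_bl) auto

lemma hom_ee: "k < p+q \<Longrightarrow> l < p+q \<Longrightarrow> hom p q (clmul p q (ev k) (ev l)) 0"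
  using hom_clmul[OF hom_ev hom_ev, of k p q l] hom_mod by fastforce

locale cls =
  fixes p q :: nat and \<rho> :: "cl \<Rightarrow> 'w::real_vector \<Rightarrow> 'w" and Pr :: "'w \<Rightarrow> 'w \<Rightarrow> vec"
  assumes module: "cl0_module p q \<rho>" and equiv: "equivariant_pairing p q \<rho> Pr"
begin

abbreviation "n \<equiv> p + q"
abbreviation mul (infixl "\<cdot>" 70) where "x \<cdot> y \<equiv> clmul p q x y"
abbreviation "E x \<equiv> hom p q x 0"

lemma M1: "\<forall>x\<in>cl_even p q. linear (\<rho> x)" using module unfolding cl0_module_def by blast
lemma M2: "\<forall>x\<in>cl_even p q. \<forall>y\<in>cl_even p q. \<forall>a::real. \<rho> (\<lambda>A. a * x A + y A) = (\<lambda>w. a *\<^sub>R \<rho> x w + \<rho> y w)"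
  using module unfolding cl0_module_def by blast
lemma M3: "\<rho> cl_one = id" using module unfolding cl0_module_def by blast
lemma M4: "\<forall>x\<in>cl_even p q. \<forall>y\<in>cl_even p q. \<rho> (clmul p q x y) = \<rho> x \<circ> \<rho> y"
  using module unfolding cl0_module_def by blast

lemma rho_lin: "E x \<Longrightarrow> linear (\<rho> x)"
  using M1 cl_even_hom by blast

lemma rho_comb: "E x \<Longrightarrow> E y \<Longrightarrow> \<rho> (\<lambda>A. a * x A + y A) = (\<lambda>w. a *\<^sub>R \<rho> x w + \<rho> y w)"
  using M2 cl_even_hom by blast

lemma rho_one: "\<rho> cl_one w = w"
  using M3 by simp

lemma rho_mul: "E x \<Longrightarrow> E y \<Longrightarrow> \<rho> (x \<cdot> y) w = \<rho> x (\<rho> y w)"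
proof -
  assume "E x" "E y"
  then have "\<rho> (x \<cdot> y) = \<rho> x \<circ> \<rho> y" using M4 cl_even_hom by blast
  then show ?thesis by simp
qed

lemma rho_ad: "E x \<Longrightarrow> E y \<Longrightarrow> \<rho> (ad x y) w = \<rho> x w + \<rho> y w"
  using rho_comb[of x y 1] unfolding ad_def by simp

lemma rho_sm: "E x \<Longrightarrow> \<rho> (sm c x) w = c *\<^sub>R \<rho> x w"
proof -
  assume x: "E x"
  have "\<rho> (\<lambda>A. c * x A + 0) w = c *\<^sub>R \<rho> x w + \<rho> (\<lambda>A. 0) w"
    using rho_comb[OF x hom_zero, of c] by simp
  moreover have "\<rho> (\<lambda>A. 0) w = 0"
  proof -
    have "\<rho> (\<lambda>A. 1 * (\<lambda>A. 0) A + (\<lambda>A. 0) A) = (\<lambda>w. 1 *\<^sub>R \<rho> (\<lambda>A. 0) w + \<rho> (\<lambda>A. 0) w)"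
      by (rule rho_comb[OF hom_zero hom_zero])
    then have "\<rho> (\<lambda>A. 0) w = \<rho> (\<lambda>A. 0) w + \<rho> (\<lambda>A. 0) w" by (simp add: fun_eq_iff)
    then show ?thesis by simp
  qed
  ultimately show ?thesis unfolding sm_def by simp
qed

lemma rho_zero: "\<rho> (\<lambda>A. 0) w = 0"
  using rho_sm[OF hom_zero, of 0 w] unfolding sm_def by simp

lemma rho_sum: "finite I \<Longrightarrow> (\<And>i. i \<in> I \<Longrightarrow> E (f i)) \<Longrightarrow> \<rho> (\<lambda>A. \<Sum>i\<in>I. f i A) w = (\<Sum>i\<in>I. \<rho> (f i) w)"
proof (induction I rule: finite_induct)
  case empty then show ?case by (simp add: rho_zero)
next
  case (insert x F)
  have "(\<lambda>A. \<Sum>i\<in>insert x F. f i A) = ad (f x) (\<lambda>A. \<Sum>i\<in>F. f i A)"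
    using insert by (simp add: ad_def)
  moreover have "E (\<lambda>A. \<Sum>i\<in>F. f i A)" using insert by (intro hom_sum) auto
  ultimately show ?case using insert by (simp add: rho_ad)
qed

lemma rho_add_w: "E x \<Longrightarrow> \<rho> x (a + b) = \<rho> x a + \<rho> x b"
  using rho_lin linear_add by blast
lemma rho_scale_w: "E x \<Longrightarrow> \<rho> x (c *\<^sub>R a) = c *\<^sub>R \<rho> x a"
  using rho_lin linear_scale by blast

lemma Pr_lin1: "linear (\<lambda>s. Pr s t k)"
  using equiv unfolding equivariant_pairing_def bilinear_def by blast
lemma Pr_lin2: "linear (\<lambda>t. Pr s t k)"
  using equiv unfolding equivariant_pairing_def bilinear_def by blast
lemma Pr_add1: "Pr (a + b) t k = Pr a t k + Pr b t k"
  using linear_add[OF Pr_lin1] by blast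
lemma Pr_add2: "Pr s (a + b) k = Pr s a k + Pr s b k"
  using linear_add[OF Pr_lin2] by blast
lemma Pr_scale1: "Pr (c *\<^sub>R a) t k = c * Pr a t k"
  using linear_scale[OF Pr_lin1] by fastforce
lemma Pr_scale2: "Pr s (c *\<^sub>R a) k = c * Pr s a k"
  using linear_scale[OF Pr_lin2] by fastforce
lemma Pr_skew: "Pr s t k = - Pr t s k"
  using equiv unfolding equivariant_pairing_def by blast
lemma Pr_zero1: "Pr 0 t k = 0"
  using Pr_scale1[of 0 0 t k] by simp
lemma Pr_sum1: "finite I \<Longrightarrow> Pr (\<Sum>i\<in>I. f i) t k = (\<Sum>i\<in>I. Pr (f i) t k)"
  by (induction I rule: finite_induct) (simp_all add: Pr_zero1 Pr_add1)
lemma Pr_sum2: "finite I \<Longrightarrow> Pr s (\<Sum>i\<in>I. f i) k = (\<Sum>i\<in>I. Pr s (f i) k)"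
  by (induction I rule: finite_induct) (simp_all add: Pr_add2 Pr_skew[of s 0] Pr_zero1)
lemma Pr_inV: "k \<ge> n \<Longrightarrow> Pr s t k = 0"
  using equiv unfolding equivariant_pairing_def in_V_def by blast

end


definition dl :: "nat \<Rightarrow> nat \<Rightarrow> nat \<Rightarrow> nat \<Rightarrow> real" where
  "dl k l = (\<lambda>i j. if i = k \<and> j = l then 1 else 0)"

lemma sum_dl: "k < N \<Longrightarrow> l < N \<Longrightarrow> (\<Sum>i<N. \<Sum>j<N. dl k l i j * f i j) = (f k l :: real)"
proof -
  assume kl: "k < N" "l < N"
  have i: "(\<Sum>j<N. dl k l i j * f i j) = (if i = k then f k l else 0)" for i
  proof (cases "i = k")
    case True
    have "(\<Sum>j<N. dl k l i j * f i j) = (\<Sum>j<N. if j = l then f k l else 0)"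
      by (rule sum.cong) (auto simp: dl_def True)
    then show ?thesis using kl True by simp
  next
    case False then show ?thesis by (simp add: dl_def)
  qed
  have "(\<Sum>i<N. \<Sum>j<N. dl k l i j * f i j) = (\<Sum>i<N. if i = k then f k l else 0)"
    unfolding i ..
  also have "\<dots> = f k l" using kl by simp
  finally show ?thesis .
qed

context cls begin

lemma ee_anti: "k < n \<Longrightarrow> l < n \<Longrightarrow> k \<noteq> l \<Longrightarrow> (ev l \<cdot> ev k) = sm (-1) (ev k \<cdot> ev l)"
proof
  fix C assume "k < n" "l < n" "k \<noteq> l"
  then have "clmul p q (bl {k}) (bl {l}) C + clmul p q (bl {l}) (bl {k}) C = 0"
    using fun_cong[OF ee_anti_bl[of k p q l], of C] by simp
  then show "(ev l \<cdot> ev k) C = sm (-1) (ev k \<cdot> ev l) C" unfolding sm_def by simp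
qed

lemma ee_same: "k < n \<Longrightarrow> (ev k \<cdot> ev k) = sm (cl_sq p k) cl_one"
proof
  fix C assume "k < n"
  then have "clmul p q (bl {k}) (bl {k}) C + clmul p q (bl {k}) (bl {k}) C = 2 * cl_sq p k * cl_one C"
    using fun_cong[OF ee_anti_bl[of k p q k], of C] by simp
  then show "(ev k \<cdot> ev k) C = sm (cl_sq p k) cl_one C" unfolding sm_def by simp
qed

lemma spin_dl: "k < n \<Longrightarrow> l < n \<Longrightarrow> k \<noteq> l \<Longrightarrow> spin_elt p q (dl k l) = sm (-1/2) (ev k \<cdot> ev l)"
proof
  fix A assume kl: "k < n" "l < n" "k \<noteq> l"
  have "spin_elt p q (dl k l) A = - (1/4) * ((ev k \<cdot> ev l) A - (ev l \<cdot> ev k) A)"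
    unfolding spin_elt_def
    using sum_dl[OF kl(1,2), where f = "\<lambda>i j. (clmul p q (clvec p q (std_basis i)) (clvec p q (std_basis j)) A - clmul p q (clvec p q (std_basis j)) (clvec p q (std_basis i)) A)"]
    by (simp add: clvec_std kl)
  also have "\<dots> = sm (-1/2) (ev k \<cdot> ev l) A"
    using ee_anti[OF kl] unfolding sm_def by simp
  finally show "spin_elt p q (dl k l) A = sm (-1/2) (ev k \<cdot> ev l) A" .
qed

lemma so_dl: "k < n \<Longrightarrow> l < n \<Longrightarrow> so_act_V p q (dl k l) z m =
   - cl_sq p l * z l * (if m = k then 1 else 0) + cl_sq p k * z k * (if m = l then 1 else 0)"
proof -
  assume kl: "k < n" "l < n"
  have "so_act_V p q (dl k l) z m = ip p q (std_basis l) z * std_basis k m - ip p q (std_basis k) z * std_basis l m"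
    unfolding so_act_V_def using kl by (rule sum_dl)
  then show ?thesis unfolding ip_std[OF kl(1)] ip_std[OF kl(2)] by (simp add: std_basis_def)
qed

lemma EQ:
  assumes kl: "k < n" "l < n" "k \<noteq> l"
  shows "Pr (\<rho> (ev k \<cdot> ev l) s) t m + Pr s (\<rho> (ev k \<cdot> ev l) t) m =
     (if m = k then 2 * cl_sq p l * Pr s t l else 0) - (if m = l then 2 * cl_sq p k * Pr s t k else 0)"
proof -
  have Y: "E (ev k \<cdot> ev l)" using kl by (intro hom_ee)
  have "so_act_V p q (dl k l) (Pr s t) = (\<lambda>m. Pr (\<rho> (spin_elt p q (dl k l)) s) t m + Pr s (\<rho> (spin_elt p q (dl k l)) t) m)"
    using equiv unfolding equivariant_pairing_def by blast
  then have "so_act_V p q (dl k l) (Pr s t) m = Pr (\<rho> (spin_elt p q (dl k l)) s) t m + Pr s (\<rho> (spin_elt p q (dl k l)) t) m"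
    by metis
  also have "\<dots> = - 1/2 * (Pr (\<rho> (ev k \<cdot> ev l) s) t m + Pr s (\<rho> (ev k \<cdot> ev l) t) m)"
    unfolding spin_dl[OF kl] rho_sm[OF Y] Pr_scale1 Pr_scale2 by (simp add: algebra_simps)
  finally show ?thesis unfolding so_dl[OF kl(1,2)] by (auto simp: algebra_simps)
qed

end

context cls begin

lemma Pr_neg1: "Pr (- a) t k = - Pr a t k" using Pr_scale1[of "-1" a t k] by simp
lemma Pr_neg2: "Pr s (- a) k = - Pr s a k" using Pr_scale2[of s "-1" a k] by simp

definition P :: "nat list \<Rightarrow> cl" where "P L = clprod p q (map std_basis L)"

lemma P_nil: "P [] = cl_one" unfolding P_def clprod_def by simp
lemma P_cons: "x < n \<Longrightarrow> P (x # L) = ev x \<cdot> P L"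
  unfolding P_def clprod_def by (simp add: clvec_std)
lemma hom_P: "hom p q (P L) (length L)" unfolding P_def using hom_clprod[of p q "map std_basis L"] by simp

lemma sm_neg_neg: "sm (-1) (sm (-1) x) = x" by simp

lemma P_append: "set L1 \<subseteq> {..<n} \<Longrightarrow> P (L1 @ L2) = P L1 \<cdot> P L2"
proof (induction L1)
  case Nil then show ?case using clmul_one_left[OF hom_P] by (simp add: P_nil)
next
  case (Cons x L1)
  then have x: "x < n" by auto
  have "P ((x # L1) @ L2) = ev x \<cdot> (P L1 \<cdot> P L2)" using Cons x by (simp add: P_cons)
  also have "\<dots> = P (x # L1) \<cdot> P L2" using x by (simp add: P_cons clmul_assoc)
  finally show ?case .
qed

lemma P_single: "x < n \<Longrightarrow> P [x] = ev x"
  using clmul_one_right[OF hom_ev] by (simp add: P_cons P_nil)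

lemma ev_commute:
  assumes "x < n" "set L \<subseteq> {..<n}" "distinct L"
  shows "ev x \<cdot> P L = sm ((-1) ^ (length L + (if x \<in> set L then 1 else 0))) (P L \<cdot> ev x)"
  using assms(2,3)
proof (induction L)
  case Nil
  show ?case using clmul_one_left[OF hom_ev[OF assms(1)]] clmul_one_right[OF hom_ev[OF assms(1)]]
    by (simp add: P_nil)
next
  case (Cons y L)
  then have y: "y < n" "y \<notin> set L" and L: "set L \<subseteq> {..<n}" "distinct L" by auto
  define s where "s = ((-1::real) ^ (length L + (if x \<in> set L then 1 else 0)))"
  have ss: "s * s = 1" unfolding s_def by (simp add: power_add[symmetric] mult_2[symmetric] power_mult)
  have IH: "ev x \<cdot> P L = sm s (P L \<cdot> ev x)" using Cons L unfolding s_def by blast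
  have IH2: "P L \<cdot> ev x = sm s (ev x \<cdot> P L)" unfolding IH using ss by simp
  show ?case
  proof (cases "x = y")
    case True
    then have s: "s = (-1) ^ length L" using y unfolding s_def by simp
    have "sm ((-1) ^ (length (y # L) + (if x \<in> set (y # L) then 1 else 0))) (P (y # L) \<cdot> ev x)
        = sm s (ev x \<cdot> (P L \<cdot> ev x))"
      using True y s by (simp add: P_cons clmul_assoc)
    also have "\<dots> = ev x \<cdot> (ev x \<cdot> P L)"
      unfolding IH2 clmul_sm_right sm_sm ss by simp
    also have "\<dots> = ev x \<cdot> P (y # L)" using y True by (simp add: P_cons)
    finally show ?thesis by simp
  next
    case False
    have "ev x \<cdot> P (y # L) = (ev x \<cdot> ev y) \<cdot> P L" using y by (simp add: P_cons clmul_assoc)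
    also have "\<dots> = sm (-1) (ev y \<cdot> (ev x \<cdot> P L))"
      unfolding ee_anti[OF y(1) assms(1) False[symmetric]] clmul_sm_left clmul_assoc ..
    also have "\<dots> = sm (-s) ((ev y \<cdot> P L) \<cdot> ev x)"
      unfolding IH clmul_sm_right clmul_assoc by simp
    also have "-s = (-1) ^ (length (y # L) + (if x \<in> set (y # L) then 1 else 0))"
      unfolding s_def using False by simp
    finally show ?thesis using y by (simp add: P_cons)
  qed
qed

lemma cl_sq_pm: "cl_sq p k = 1 \<or> cl_sq p k = -1" unfolding cl_sq_def by auto

lemma rho_neg: "E X \<Longrightarrow> \<rho> (sm (-1) X) w = - \<rho> X w"
  using rho_sm[of X "-1" w] by simp

lemma YY: "k < n \<Longrightarrow> l < n \<Longrightarrow> k \<noteq> l \<Longrightarrow> (ev k \<cdot> ev l) \<cdot> (ev k \<cdot> ev l) = sm (- (cl_sq p k * cl_sq p l)) cl_one"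
proof -
  assume kl: "k < n" "l < n" "k \<noteq> l"
  have "(ev k \<cdot> ev l) \<cdot> (ev k \<cdot> ev l) = ev k \<cdot> ((ev l \<cdot> ev k) \<cdot> ev l)" by (simp add: clmul_assoc)
  also have "\<dots> = sm (-1) ((ev k \<cdot> ev k) \<cdot> (ev l \<cdot> ev l))"
    unfolding ee_anti[OF kl(1,2) kl(3)] clmul_sm_left clmul_sm_right by (simp add: clmul_assoc)
  also have "\<dots> = sm (- (cl_sq p k * cl_sq p l)) cl_one"
    unfolding ee_same[OF kl(1)] ee_same[OF kl(2)] clmul_sm_left clmul_sm_right clmul_one_left[OF hom_one] by (simp add: mult.commute)
  finally show ?thesis .
qed

lemma YZ: "k < n \<Longrightarrow> l < n \<Longrightarrow> (ev k \<cdot> ev l) \<cdot> (ev l \<cdot> ev k) = sm (cl_sq p k * cl_sq p l) cl_one"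
proof -
  assume kl: "k < n" "l < n"
  have "(ev k \<cdot> ev l) \<cdot> (ev l \<cdot> ev k) = ev k \<cdot> ((ev l \<cdot> ev l) \<cdot> ev k)" by (simp add: clmul_assoc)
  also have "\<dots> = sm (cl_sq p l) (ev k \<cdot> ev k)"
    unfolding ee_same[OF kl(2)] clmul_sm_left clmul_sm_right clmul_one_left[OF hom_ev[OF kl(1)]] ..
  also have "\<dots> = sm (cl_sq p k * cl_sq p l) cl_one"
    unfolding ee_same[OF kl(1)] by (simp add: mult.commute)
  finally show ?thesis .
qed

lemma Kp:
  assumes kl: "k < n" "l < n" "k \<noteq> l" and a: "E a"
  shows "Pr (\<rho> a s) t k = cl_sq p k * Pr (\<rho> (ev l \<cdot> ev k \<cdot> a) s) t l"
proof -
  define Y where "Y = ev k \<cdot> ev l"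
  define Z where "Z = ev l \<cdot> ev k"
  have EY: "E Y" unfolding Y_def using kl by (intro hom_ee)
  have EZ: "E Z" unfolding Z_def using kl by (intro hom_ee)
  have EZa: "E (Z \<cdot> a)" using hom_clmul[OF EZ a] by simp
  have YZ': "Y = sm (-1) Z" unfolding Y_def Z_def using ee_anti[OF kl(2,1)] kl(3) by simp
  have Ya: "\<rho> Y (\<rho> a w) = - \<rho> (Z \<cdot> a) w" for w
    using rho_mul[OF EY a, symmetric] unfolding YZ' clmul_sm_left rho_neg[OF EZa] .
  have YYt: "\<rho> Y (\<rho> Y w) = (- (cl_sq p k * cl_sq p l)) *\<^sub>R w" for w
    using rho_mul[OF EY EY, symmetric] unfolding Y_def YY[OF kl] rho_sm[OF hom_one] rho_one .
  have YZa: "\<rho> Y (\<rho> (Z \<cdot> a) w) = (cl_sq p k * cl_sq p l) *\<^sub>R \<rho> a w" for w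
  proof -
    have "\<rho> Y (\<rho> (Z \<cdot> a) w) = \<rho> ((Y \<cdot> Z) \<cdot> a) w"
      using rho_mul[OF EY EZa, symmetric] by (simp add: clmul_assoc)
    also have "\<dots> = \<rho> (sm (cl_sq p k * cl_sq p l) a) w"
      unfolding Y_def Z_def YZ[OF kl(1,2)] clmul_sm_left clmul_one_left[OF a] ..
    finally show ?thesis using rho_sm[OF a] by simp
  qed
  let ?A = "Pr (\<rho> a s) t k" and ?B = "Pr (\<rho> (Z \<cdot> a) s) t l"
  let ?M = "Pr (\<rho> (Z \<cdot> a) s) (\<rho> Y t) k" and ?N = "Pr (\<rho> a s) (\<rho> Y t) l"
  have i: "Pr (\<rho> Y (\<rho> a s)) (\<rho> Y t) k + Pr (\<rho> a s) (\<rho> Y (\<rho> Y t)) k = 2 * cl_sq p l * ?N"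
    using EQ[OF kl, of "\<rho> a s" "\<rho> Y t" k] kl(3) unfolding Y_def by simp
  then have i': "- ?M - cl_sq p k * cl_sq p l * ?A = 2 * cl_sq p l * ?N"
    unfolding Ya YYt Pr_scale2 Pr_neg1 by simp
  have iii: "Pr (\<rho> Y (\<rho> (Z \<cdot> a) s)) t k + ?M = 2 * cl_sq p l * ?B"
    using EQ[OF kl, of "\<rho> (Z \<cdot> a) s" t k] kl(3) unfolding Y_def by simp
  then have iii': "cl_sq p k * cl_sq p l * ?A + ?M = 2 * cl_sq p l * ?B"
    unfolding YZa Pr_scale1 .
  have iv: "Pr (\<rho> Y (\<rho> a s)) t l + ?N = - (2 * cl_sq p k * ?A)"
    using EQ[OF kl, of "\<rho> a s" t l] kl(3) unfolding Y_def by simp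
  then have iv': "- ?B + ?N = - (2 * cl_sq p k * ?A)"
    unfolding Ya using Pr_scale1[of "-1" "\<rho> (Z \<cdot> a) s" t l] by simp
  have "2 * cl_sq p l * (?N + ?B) = 0"
    using i' iii' by (simp add: algebra_simps)
  then have "?N + ?B = 0" using cl_sq_pm[of l] by auto
  then have "?B = cl_sq p k * ?A" using iv' by simp
  then show ?thesis unfolding Z_def using cl_sq_pm[of k] by auto
qed

end

lemma tri_step: "(Suc m) * m div 2 = m * (m - 1) div 2 + m"
proof (cases m)
  case 0 then show ?thesis by simp
next
  case (Suc k)
  have "Suc m * m = m * (m - 1) + 2 * m" using Suc by (simp add: algebra_simps)
  then show ?thesis by simp
qed

context cls begin

lemma P_rev:
  assumes "set L \<subseteq> {..<n}" "distinct L"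
  shows "P (rev L) = sm ((-1) ^ (length L * (length L - 1) div 2)) (P L)"
  using assms
proof (induction L)
  case Nil then show ?case by simp
next
  case (Cons x L)
  then have x: "x < n" "x \<notin> set L" and L: "set L \<subseteq> {..<n}" "distinct L" by auto
  define m where "m = length L"
  have c: "ev x \<cdot> P L = sm ((-1) ^ m) (P L \<cdot> ev x)"
    using ev_commute[OF x(1) L] x(2) unfolding m_def by simp
  have c2: "P L \<cdot> ev x = sm ((-1) ^ m) (ev x \<cdot> P L)"
    unfolding c by (simp add: power_add[symmetric] mult_2[symmetric] power_mult)
  have "P (rev (x # L)) = P (rev L) \<cdot> P [x]"
    using L by (simp add: P_append)
  also have "\<dots> = sm ((-1) ^ (m * (m - 1) div 2)) (P L \<cdot> ev x)"
    unfolding Cons.IH[OF L] P_single[OF x(1)] clmul_sm_left m_def ..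
  also have "\<dots> = sm ((-1) ^ (m * (m - 1) div 2 + m)) (P (x # L))"
    unfolding c2 P_cons[OF x(1)] by (simp add: power_add)
  also have "m * (m - 1) div 2 + m = length (x # L) * (length (x # L) - 1) div 2"
    unfolding m_def using tri_step[of "length L"] by simp
  finally show ?case .
qed

lemma skew0: "x < n \<Longrightarrow> y < n \<Longrightarrow> x \<noteq> y \<Longrightarrow> x \<noteq> 0 \<Longrightarrow> y \<noteq> 0 \<Longrightarrow>
   Pr (\<rho> (ev x \<cdot> ev y) s) t 0 = - Pr s (\<rho> (ev x \<cdot> ev y) t) 0"
  using EQ[of x y s t 0] by simp

lemma E_P: "even (length L) \<Longrightarrow> E (P L)"
  using hom_P[of L] hom_mod by fastforce

lemma P_adj:
  assumes "set L \<subseteq> {..<n}" "distinct L" "0 \<notin> set L" "even (length L)"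
  shows "Pr (\<rho> (P L) s) t 0 = Pr s (\<rho> (P (rev L)) t) 0"
  using assms
proof (induction L arbitrary: s t rule: induct_list012)
  case 1 then show ?case by (simp add: P_nil rho_one)
next
  case (2 x) then show ?case by simp
next
  case (3 x y zs)
  then have xy: "x < n" "y < n" "x \<noteq> y" "x \<noteq> 0" "y \<noteq> 0" and zs: "set zs \<subseteq> {..<n}" "distinct zs" "0 \<notin> set zs" "even (length zs)"
    by auto
  have EY: "E (ev x \<cdot> ev y)" using xy by (intro hom_ee)
  have Ez: "E (P zs)" "E (P (rev zs))" using zs by (auto intro: E_P)
  have "P (x # y # zs) = (ev x \<cdot> ev y) \<cdot> P zs" using xy by (simp add: P_cons clmul_assoc)
  then have "Pr (\<rho> (P (x # y # zs)) s) t 0 = Pr (\<rho> (ev x \<cdot> ev y) (\<rho> (P zs) s)) t 0"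
    using rho_mul[OF EY Ez(1)] by simp
  also have "\<dots> = - Pr (\<rho> (P zs) s) (\<rho> (ev x \<cdot> ev y) t) 0" using skew0[OF xy] by simp
  also have "\<dots> = - Pr s (\<rho> (P (rev zs)) (\<rho> (ev x \<cdot> ev y) t)) 0" using 3(1)[OF zs] by simp
  also have "\<dots> = - Pr s (\<rho> (P (rev zs) \<cdot> (ev x \<cdot> ev y)) t) 0" using rho_mul[OF Ez(2) EY] by simp
  also have "\<dots> = Pr s (\<rho> (P (rev (x # y # zs))) t) 0"
  proof -
    have r: "rev (x # y # zs) = rev zs @ [y, x]" by simp
    have "set (rev zs) \<subseteq> {..<n}" using zs by simp
    then have "P (rev (x # y # zs)) = P (rev zs) \<cdot> P [y, x]" unfolding r by (rule P_append)
    also have "P [y, x] = ev y \<cdot> ev x" unfolding P_cons[OF xy(2)] P_single[OF xy(1)] ..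
    also have "\<dots> = sm (-1) (ev x \<cdot> ev y)" by (rule ee_anti[OF xy(1,2,3)])
    finally have "P (rev (x # y # zs)) = sm (-1) (P (rev zs) \<cdot> (ev x \<cdot> ev y))" by (simp add: clmul_sm_right)
    moreover have "E (P (rev zs) \<cdot> (ev x \<cdot> ev y))" using hom_clmul[OF Ez(2) EY] by simp
    ultimately show ?thesis using rho_neg Pr_neg2 by simp
  qed
  finally show ?case .
qed

end

locale cls2 = cls +
  fixes p' :: nat
  assumes p'3: "p' mod 4 = 3" and p'p: "p' \<le> p"
begin

definition L0 :: "nat list" where "L0 = [1..<p']"
definition u :: cl where "u = P L0"
definition bb where "bb s t = Pr (\<rho> u s) t 0"

lemma p'ge: "3 \<le> p'"
proof (rule ccontr)
  assume "\<not> 3 \<le> p'"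
  then have "p' < 3" by simp
  then have "p' mod 4 = p'" by simp
  then show False using p'3 \<open>p' < 3\<close> by simp
qed
lemma p'odd: "even (p' - 1)"
proof -
  have "p' = 4 * (p' div 4) + 3" using p'3 div_mult_mod_eq[of p' 4] by simp
  then have "p' - 1 = 2 * (2 * (p' div 4) + 1)" by simp
  then show ?thesis by simp
qed
lemma L0_1: "set L0 \<subseteq> {..<n}" unfolding L0_def using p'p by auto
lemma L0_2: "distinct L0" unfolding L0_def by simp
lemma L0_3: "0 \<notin> set L0" unfolding L0_def by simp
lemma L0_4: "length L0 = p' - 1" unfolding L0_def by simp
lemma L0_5: "even (length L0)" unfolding L0_4 by (rule p'odd)
lemma L0_6: "x \<in> set L0 \<longleftrightarrow> 1 \<le> x \<and> x < p'" unfolding L0_def by simp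
lemmas L0_props = L0_1 L0_2 L0_3 L0_4 L0_5 L0_6

lemma Eu: "E u" unfolding u_def by (rule E_P[OF L0_5])

lemma bb_can: "b_can p q p' \<rho> Pr s t = bb s t"
proof -
  have p0: "0 < p" using p'ge p'p by simp
  have e: "clprod p q (map std_basis [1..<p']) = u" unfolding u_def P_def L0_def ..
  have "b_can p q p' \<rho> Pr s t = ip p q (std_basis 0) (Pr (\<rho> u s) t)"
    unfolding b_can_def b_gen_def e ..
  also have "\<dots> = - cl_sq p 0 * Pr (\<rho> u s) t 0" using p0 by (intro ip_std) simp
  also have "\<dots> = bb s t" using p0 unfolding bb_def cl_sq_def by simp
  finally show ?thesis .
qed

lemma u_rev: "P (rev L0) = sm (-1) u"
proof -
  define r where "r = p' div 4"
  have r: "p' = 4 * r + 3" unfolding r_def using p'3 div_mult_mod_eq[of p' 4] by simp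
  have l: "length L0 = 4 * r + 2" using r L0_props(4) by simp
  have "(4 * r + 2) * (4 * r + 1) = 2 * ((2 * r + 1) * (4 * r + 1))" by (simp add: algebra_simps)
  then have "length L0 * (length L0 - 1) div 2 = (2 * r + 1) * (4 * r + 1)"
    unfolding l by simp
  moreover have "odd ((2 * r + 1) * (4 * r + 1))" by simp
  ultimately have "(-1::real) ^ (length L0 * (length L0 - 1) div 2) = -1"
    using neg_one_odd_power by metis
  then show ?thesis unfolding u_def using P_rev[OF L0_props(1,2)] by simp
qed

theorem bb_sym: "bb s t = bb t s"
proof -
  have "bb s t = Pr s (\<rho> (P (rev L0)) t) 0" unfolding bb_def u_def by (rule P_adj[OF L0_props(1,2,3,5)])
  also have "\<dots> = - Pr s (\<rho> u t) 0" unfolding u_rev rho_neg[OF Eu] Pr_neg2 ..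
  also have "\<dots> = bb t s" unfolding bb_def using Pr_skew[of "\<rho> u t" s 0] by simp
  finally show ?thesis .
qed

end

context cls2 begin

lemma bb_add1: "bb (a + b) t = bb a t + bb b t" unfolding bb_def using rho_add_w[OF Eu] Pr_add1 by simp
lemma bb_scale1: "bb (c *\<^sub>R a) t = c * bb a t" unfolding bb_def using rho_scale_w[OF Eu] Pr_scale1 by simp
lemma bb_add2: "bb s (a + b) = bb s a + bb s b" unfolding bb_def using Pr_add2 by simp
lemma bb_scale2: "bb s (c *\<^sub>R a) = c * bb s a" unfolding bb_def using Pr_scale2 by simp
lemma bb_neg1: "bb (- a) t = - bb a t" using bb_scale1[of "-1" a t] by simp
lemma bb_neg2: "bb s (- a) = - bb s a" using bb_scale2[of s "-1" a] by simp
lemma bb_zero1: "bb 0 t = 0" using bb_scale1[of 0 0 t] by simp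
lemma bb_zero2: "bb s 0 = 0" using bb_scale2[of s 0 0] by simp
lemma bb_sum1: "finite I \<Longrightarrow> bb (\<Sum>i\<in>I. f i) t = (\<Sum>i\<in>I. bb (f i) t)"
  by (induction I rule: finite_induct) (simp_all add: bb_zero1 bb_add1)
lemma bb_sum2: "finite I \<Longrightarrow> bb s (\<Sum>i\<in>I. f i) = (\<Sum>i\<in>I. bb s (f i))"
  by (induction I rule: finite_induct) (simp_all add: bb_zero2 bb_add2)

definition cs :: "nat \<Rightarrow> real" where "cs x = (if 1 \<le> x \<and> x < p' then -1 else 1)"

lemma cs_sq: "cs x * cs x = 1" unfolding cs_def by simp

lemma commute_u: "x < n \<Longrightarrow> ev x \<cdot> u = sm (cs x) (u \<cdot> ev x)"
proof -
  assume x: "x < n"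
  have "ev x \<cdot> u = sm ((-1) ^ (length L0 + (if x \<in> set L0 then 1 else 0))) (u \<cdot> ev x)"
    unfolding u_def by (rule ev_commute[OF x L0_1 L0_2])
  moreover have "(-1::real) ^ (length L0 + (if x \<in> set L0 then 1 else 0)) = cs x"
    using L0_5 unfolding cs_def L0_6 by (simp add: power_add)
  ultimately show ?thesis by simp
qed

lemma Yu: "i < n \<Longrightarrow> j < n \<Longrightarrow> (ev i \<cdot> ev j) \<cdot> u = sm (cs i * cs j) (u \<cdot> (ev i \<cdot> ev j))"
proof -
  assume ij: "i < n" "j < n"
  have "(ev i \<cdot> ev j) \<cdot> u = ev i \<cdot> (ev j \<cdot> u)" by (simp add: clmul_assoc)
  also have "\<dots> = sm (cs j) ((ev i \<cdot> u) \<cdot> ev j)"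
    unfolding commute_u[OF ij(2)] clmul_sm_right clmul_assoc ..
  also have "\<dots> = sm (cs i * cs j) (u \<cdot> (ev i \<cdot> ev j))"
    unfolding commute_u[OF ij(1)] clmul_sm_left clmul_assoc by (simp add: mult.commute)
  finally show ?thesis .
qed

lemma uY: "i < n \<Longrightarrow> j < n \<Longrightarrow> u \<cdot> (ev i \<cdot> ev j) = sm (cs i * cs j) ((ev i \<cdot> ev j) \<cdot> u)"
  unfolding Yu by (simp add: cs_sq mult_ac)
  
lemma rho_Yu: "i < n \<Longrightarrow> j < n \<Longrightarrow> \<rho> u (\<rho> (ev i \<cdot> ev j) s) = (cs i * cs j) *\<^sub>R \<rho> (ev i \<cdot> ev j) (\<rho> u s)"
proof -
  assume ij: "i < n" "j < n"
  have EY: "E (ev i \<cdot> ev j)" using ij by (intro hom_ee)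
  have EYu: "E ((ev i \<cdot> ev j) \<cdot> u)" using hom_clmul[OF EY Eu] by simp
  have "\<rho> u (\<rho> (ev i \<cdot> ev j) s) = \<rho> (u \<cdot> (ev i \<cdot> ev j)) s" using rho_mul[OF Eu EY] by simp
  also have "\<dots> = (cs i * cs j) *\<^sub>R \<rho> ((ev i \<cdot> ev j) \<cdot> u) s" unfolding uY[OF ij] rho_sm[OF EYu] ..
  also have "\<dots> = (cs i * cs j) *\<^sub>R \<rho> (ev i \<cdot> ev j) (\<rho> u s)" using rho_mul[OF EY Eu] by simp
  finally show ?thesis .
qed

definition eps :: "nat \<Rightarrow> nat \<Rightarrow> real" where "eps i j = (if (i < p') = (j < p') then -1 else 1)"

lemma elemA:
  assumes ij: "i < n" "j < n" "i \<noteq> j" "i \<noteq> 0" "j \<noteq> 0"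
  shows "bb (\<rho> (ev i \<cdot> ev j) s) t = eps i j * bb s (\<rho> (ev i \<cdot> ev j) t)"
proof -
  have "bb (\<rho> (ev i \<cdot> ev j) s) t = (cs i * cs j) * Pr (\<rho> (ev i \<cdot> ev j) (\<rho> u s)) t 0"
    unfolding bb_def rho_Yu[OF ij(1,2)] Pr_scale1 ..
  also have "\<dots> = - (cs i * cs j) * bb s (\<rho> (ev i \<cdot> ev j) t)"
    unfolding bb_def using skew0[OF ij] by simp
  also have "- (cs i * cs j) = eps i j" unfolding cs_def eps_def using ij by auto
  finally show ?thesis .
qed

lemma elemB:
  assumes j: "j < n" "j \<noteq> 0"
  shows "bb (\<rho> (ev 0 \<cdot> ev j) s) t = eps 0 j * bb s (\<rho> (ev 0 \<cdot> ev j) t)"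
proof -
  have n0: "0 < n" using j(1) by linarith
  let ?Y = "ev 0 \<cdot> ev j"
  have EY: "E ?Y" using j n0 by (intro hom_ee)
  have EYu: "E (?Y \<cdot> u)" using hom_clmul[OF EY Eu] by simp
  have eq: "Pr (\<rho> ?Y (\<rho> u s)) t 0 + Pr (\<rho> u s) (\<rho> ?Y t) 0 = 2 * cl_sq p j * Pr (\<rho> u s) t j"
    using EQ[OF n0 j(1) j(2)[symmetric], of "\<rho> u s" t 0] j by simp
  have kp: "Pr (\<rho> u s) t j = cl_sq p j * Pr (\<rho> (?Y \<cdot> u) s) t 0"
    using Kp[OF j(1) n0 j(2) Eu, of s t] .
  have r: "\<rho> ?Y (\<rho> u s) = \<rho> (?Y \<cdot> u) s" using rho_mul[OF EY Eu] by simp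
  have "Pr (\<rho> u s) (\<rho> ?Y t) 0 = Pr (\<rho> (?Y \<cdot> u) s) t 0"
  proof -
    have "Pr (\<rho> (?Y \<cdot> u) s) t 0 + Pr (\<rho> u s) (\<rho> ?Y t) 0 = 2 * (cl_sq p j * cl_sq p j) * Pr (\<rho> (?Y \<cdot> u) s) t 0"
      using eq unfolding r kp by (simp add: mult_ac)
    then show ?thesis by (simp add: cl_sq_sq)
  qed
  also have "\<dots> = cs j * bb (\<rho> ?Y s) t"
    unfolding bb_def rho_Yu[OF n0 j(1)] Pr_scale1 r[symmetric] by (simp add: cs_def)
  finally have "bb s (\<rho> ?Y t) = cs j * bb (\<rho> ?Y s) t" unfolding bb_def .
  then have "bb (\<rho> ?Y s) t = cs j * bb s (\<rho> ?Y t)" using cs_sq[of j] by (simp add: mult.assoc[symmetric])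
  moreover have "cs j = eps 0 j" unfolding cs_def eps_def using j p'ge by auto
  ultimately show ?thesis by simp
qed

lemma elem:
  assumes ij: "i < n" "j < n" "i \<noteq> j"
  shows "bb (\<rho> (ev i \<cdot> ev j) s) t = eps i j * bb s (\<rho> (ev i \<cdot> ev j) t)"
proof -
  consider "i = 0" | "j = 0" | "i \<noteq> 0 \<and> j \<noteq> 0" by blast
  then show ?thesis
  proof cases
    case 1 then show ?thesis using elemB[of j s t] ij by simp
  next
    case 2
    have EY: "E (ev j \<cdot> ev i)" using ij by (intro hom_ee)
    have r: "\<rho> (ev i \<cdot> ev j) w = - \<rho> (ev j \<cdot> ev i) w" for w
      unfolding ee_anti[OF ij(2,1) ij(3)[symmetric]] rho_neg[OF EY] ..
    have "eps j i = eps i j" unfolding eps_def by auto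
    then show ?thesis unfolding r bb_neg1 bb_neg2 using elemB[of i s t] ij 2 by simp
  next
    case 3 then show ?thesis using elemA ij by blast
  qed
qed

end

context cls2 begin

lemma bb_diff1: "bb (a - b) t = bb a t - bb b t" using bb_add1[of a "-b" t] bb_neg1 by simp
lemma bb_diff2: "bb s (a - b) = bb s a - bb s b" using bb_add2[of s a "-b"] bb_neg2 by simp

lemma spin_expand: "spin_elt p q c = (\<lambda>A. \<Sum>i\<in>{..<n}. \<Sum>j\<in>{..<n}.
     sm (-1/4 * c i j) (ad (ev i \<cdot> ev j) (sm (-1) (ev j \<cdot> ev i))) A)"
proof
  fix A
  have "spin_elt p q c A = (\<Sum>i\<in>{..<n}. \<Sum>j\<in>{..<n}. - (1/4) * (c i j *
      (clmul p q (clvec p q (std_basis i)) (clvec p q (std_basis j)) A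
       - clmul p q (clvec p q (std_basis j)) (clvec p q (std_basis i)) A)))"
    unfolding spin_elt_def sum_distrib_left ..
  also have "\<dots> = (\<Sum>i\<in>{..<n}. \<Sum>j\<in>{..<n}. sm (-1/4 * c i j) (ad (ev i \<cdot> ev j) (sm (-1) (ev j \<cdot> ev i))) A)"
  proof (intro sum.cong refl)
    fix i j assume "i \<in> {..<n}" "j \<in> {..<n}"
    then have "i < n" "j < n" by auto
    then show "- (1/4) * (c i j * (clmul p q (clvec p q (std_basis i)) (clvec p q (std_basis j)) A
       - clmul p q (clvec p q (std_basis j)) (clvec p q (std_basis i)) A)) =
       sm (-1/4 * c i j) (ad (ev i \<cdot> ev j) (sm (-1) (ev j \<cdot> ev i))) A"
      by (simp add: clvec_std sm_def ad_def algebra_simps)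
  qed
  finally show "spin_elt p q c A = (\<Sum>i\<in>{..<n}. \<Sum>j\<in>{..<n}. sm (-1/4 * c i j) (ad (ev i \<cdot> ev j) (sm (-1) (ev j \<cdot> ev i))) A)" .
qed

lemma rho_spin: "\<rho> (spin_elt p q c) s = (\<Sum>i\<in>{..<n}. \<Sum>j\<in>{..<n}.
     (-1/4 * c i j) *\<^sub>R (\<rho> (ev i \<cdot> ev j) s - \<rho> (ev j \<cdot> ev i) s))"
proof -
  let ?g = "\<lambda>i j. sm (-1/4 * c i j) (ad (ev i \<cdot> ev j) (sm (-1) (ev j \<cdot> ev i)))"
  have Eg: "E (?g i j)" if "i < n" "j < n" for i j
    using that by (intro hom_sm hom_ad hom_ee)
  have Ef: "E (\<lambda>A. \<Sum>j\<in>{..<n}. ?g i j A)" if "i < n" for i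
    using that Eg by (intro hom_sum) auto
  have "\<rho> (spin_elt p q c) s = (\<Sum>i\<in>{..<n}. \<rho> (\<lambda>A. \<Sum>j\<in>{..<n}. ?g i j A) s)"
    unfolding spin_expand using Ef by (intro rho_sum) auto
  also have "\<dots> = (\<Sum>i\<in>{..<n}. \<Sum>j\<in>{..<n}. \<rho> (?g i j) s)"
    using Eg by (intro sum.cong refl rho_sum) auto
  also have "\<dots> = (\<Sum>i\<in>{..<n}. \<Sum>j\<in>{..<n}. (-1/4 * c i j) *\<^sub>R (\<rho> (ev i \<cdot> ev j) s - \<rho> (ev j \<cdot> ev i) s))"
  proof (intro sum.cong refl)
    fix i j assume "i \<in> {..<n}" "j \<in> {..<n}"
    then have ij: "i < n" "j < n" by auto
    have E1: "E (ev i \<cdot> ev j)" "E (ev j \<cdot> ev i)" using ij by (auto intro: hom_ee)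
    have E2: "E (ad (ev i \<cdot> ev j) (sm (-1) (ev j \<cdot> ev i)))" using E1 by (intro hom_ad hom_sm)
    show "\<rho> (?g i j) s = (-1/4 * c i j) *\<^sub>R (\<rho> (ev i \<cdot> ev j) s - \<rho> (ev j \<cdot> ev i) s)"
      unfolding rho_sm[OF E2] rho_ad[OF E1(1) hom_sm[OF E1(2)]] rho_neg[OF E1(2)] by simp
  qed
  finally show ?thesis .
qed

theorem gen4:
  assumes c: "\<forall>i<n. \<forall>j<n. c i j \<noteq> 0 \<longrightarrow> i \<noteq> j \<longrightarrow> eps i j = \<epsilon>"
  shows "bb (\<rho> (spin_elt p q c) s) t = \<epsilon> * bb s (\<rho> (spin_elt p q c) t)"
proof -
  have "bb (\<rho> (spin_elt p q c) s) t = (\<Sum>i\<in>{..<n}. \<Sum>j\<in>{..<n}.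
      (-1/4 * c i j) * (bb (\<rho> (ev i \<cdot> ev j) s) t - bb (\<rho> (ev j \<cdot> ev i) s) t))"
    unfolding rho_spin bb_sum1[OF finite_lessThan] bb_scale1 bb_diff1 ..
  also have "\<dots> = (\<Sum>i\<in>{..<n}. \<Sum>j\<in>{..<n}.
      \<epsilon> * ((-1/4 * c i j) * (bb s (\<rho> (ev i \<cdot> ev j) t) - bb s (\<rho> (ev j \<cdot> ev i) t))))"
  proof (intro sum.cong refl)
    fix i j assume "i \<in> {..<n}" "j \<in> {..<n}"
    then have ij: "i < n" "j < n" by auto
    show "(-1/4 * c i j) * (bb (\<rho> (ev i \<cdot> ev j) s) t - bb (\<rho> (ev j \<cdot> ev i) s) t) =
      \<epsilon> * ((-1/4 * c i j) * (bb s (\<rho> (ev i \<cdot> ev j) t) - bb s (\<rho> (ev j \<cdot> ev i) t)))"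
    proof (cases "c i j = 0 \<or> i = j")
      case True then show ?thesis by auto
    next
      case False
      then have e: "eps i j = \<epsilon>" using c ij by blast
      have e2: "eps j i = \<epsilon>" using e unfolding eps_def by auto
      show ?thesis using elem[OF ij] elem[OF ij(2,1)] False e e2 by (simp add: algebra_simps)
    qed
  qed
  also have "\<dots> = \<epsilon> * bb s (\<rho> (spin_elt p q c) t)"
    unfolding rho_spin bb_sum2[OF finite_lessThan] bb_scale2 bb_diff2 sum_distrib_left ..
  finally show ?thesis .
qed

end

lemma symsum:
  fixes w :: "nat \<Rightarrow> real" and \<beta> :: "nat \<Rightarrow> nat \<Rightarrow> real"
  assumes "finite I"
    and off: "\<And>k i. k \<in> I \<Longrightarrow> i \<in> I \<Longrightarrow> k \<noteq> i \<Longrightarrow> w k * w i * (\<beta> k i + \<beta> i k) = 0"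
    and dia: "\<And>k. k \<in> I \<Longrightarrow> w k * w k * \<beta> k k = w k * w k * b0"
  shows "(\<Sum>k\<in>I. \<Sum>i\<in>I. w k * w i * \<beta> k i) = b0 * (\<Sum>k\<in>I. w k * w k)"
proof -
  let ?S = "(\<Sum>k\<in>I. \<Sum>i\<in>I. w k * w i * \<beta> k i)"
  have sw: "?S = (\<Sum>k\<in>I. \<Sum>i\<in>I. w k * w i * \<beta> i k)"
    by (subst sum.swap) (simp add: mult_ac)
  have "?S + ?S = (\<Sum>k\<in>I. \<Sum>i\<in>I. w k * w i * (\<beta> k i + \<beta> i k))"
    by (subst (2) sw) (simp add: sum.distrib[symmetric] distrib_left)
  also have "\<dots> = (\<Sum>k\<in>I. \<Sum>i\<in>I. if i = k then 2 * (w k * w k * b0) else 0)"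
  proof (intro sum.cong refl)
    fix k i assume "k \<in> I" "i \<in> I"
    then show "w k * w i * (\<beta> k i + \<beta> i k) = (if i = k then 2 * (w k * w k * b0) else 0)"
      using off dia by (cases "i = k") (auto simp: algebra_simps)
  qed
  also have "\<dots> = (\<Sum>k\<in>I. 2 * (w k * w k * b0))" using assms(1) by simp
  also have "\<dots> = 2 * (b0 * (\<Sum>k\<in>I. w k * w k))" by (simp add: sum_distrib_left mult_ac)
  finally show ?thesis by linarith
qed

context cls2 begin

definition om :: cl where "om = P [0..<p']"

lemma om_u: "om = ev 0 \<cdot> u"
proof -
  have "[0..<p'] = 0 # L0" unfolding L0_def using p'ge upt_conv_Cons by auto
  moreover have "0 < n" using p'ge p'p by linarith
  ultimately show ?thesis unfolding om_def u_def by (simp add: P_cons)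
qed

lemma hom_om: "hom p q om p'" unfolding om_def using hom_P[of "[0..<p']"] by simp

lemma E_evom: "i < n \<Longrightarrow> E (ev i \<cdot> om)"
proof -
  assume "i < n"
  then have "hom p q (ev i \<cdot> om) (1 + p')" using hom_clmul[OF hom_ev hom_om] by blast
  moreover have "even (1 + p')" using p'odd p'ge by presburger
  ultimately show ?thesis using hom_mod by fastforce
qed

lemma clsqE: "k < p' \<Longrightarrow> cl_sq p k = -1" using p'p unfolding cl_sq_def by simp

definition beta where "beta s t k i = Pr (\<rho> (ev i \<cdot> om) s) t k"

lemma beta00: "beta s t 0 0 = - bb s t"
proof -
  have n0: "0 < n" using p'ge p'p by linarith
  have "ev 0 \<cdot> om = sm (-1) u"
    unfolding om_u clmul_assoc[symmetric] ee_same[OF n0] clmul_sm_left clmul_one_left[OF Eu]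
    using clsqE[of 0] p'ge by simp
  then show ?thesis unfolding beta_def bb_def using rho_neg[OF Eu] Pr_neg1 by simp
qed

lemma beta_dia: "k < p' \<Longrightarrow> beta s t k k = beta s t 0 0"
proof (cases "k = 0")
  case True then show ?thesis by simp
next
  case False
  assume k: "k < p'"
  have kn: "k < n" and n0: "0 < n" using k p'p by linarith+
  have "beta s t k k = cl_sq p k * Pr (\<rho> (ev 0 \<cdot> ev k \<cdot> (ev k \<cdot> om)) s) t 0"
    unfolding beta_def by (rule Kp[OF kn n0 False E_evom[OF kn]])
  moreover have "ev 0 \<cdot> ev k \<cdot> (ev k \<cdot> om) = sm (-1) (ev 0 \<cdot> om)"
  proof -
    have "ev 0 \<cdot> ev k \<cdot> (ev k \<cdot> om) = ev 0 \<cdot> ((ev k \<cdot> ev k) \<cdot> om)" by (simp add: clmul_assoc)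
    also have "\<dots> = sm (-1) (ev 0 \<cdot> om)"
      unfolding ee_same[OF kn] clsqE[OF k] clmul_sm_left clmul_sm_right clmul_one_left[OF hom_om] ..
    finally show ?thesis .
  qed
  ultimately show ?thesis unfolding beta_def using rho_neg[OF E_evom[OF n0]] Pr_neg1 clsqE[OF k] by simp
qed

lemma beta_off: "k < p' \<Longrightarrow> i < p' \<Longrightarrow> k \<noteq> i \<Longrightarrow> beta s t k i = - beta s t i k"
proof -
  assume k: "k < p'" and i: "i < p'" and ki: "k \<noteq> i"
  have kn: "k < n" and iN: "i < n" using k i p'p by linarith+
  have "beta s t k i = cl_sq p k * Pr (\<rho> (ev i \<cdot> ev k \<cdot> (ev i \<cdot> om)) s) t i"
    unfolding beta_def by (rule Kp[OF kn iN ki E_evom[OF iN]])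
  moreover have "ev i \<cdot> ev k \<cdot> (ev i \<cdot> om) = ev k \<cdot> om"
  proof -
    have "ev i \<cdot> ev k \<cdot> (ev i \<cdot> om) = ((ev i \<cdot> ev k) \<cdot> ev i) \<cdot> om" by (simp add: clmul_assoc)
    also have "(ev i \<cdot> ev k) \<cdot> ev i = ev k"
    proof -
      have "(ev i \<cdot> ev k) \<cdot> ev i = sm (-1) ((ev k \<cdot> ev i) \<cdot> ev i)"
        unfolding ee_anti[OF kn iN ki] clmul_sm_left ..
      also have "\<dots> = ev k"
        unfolding clmul_assoc ee_same[OF iN] clsqE[OF i] clmul_sm_right clmul_one_right[OF hom_ev[OF kn]] by simp
      finally show ?thesis .
    qed
    finally show ?thesis .
  qed
  ultimately show ?thesis unfolding beta_def clsqE[OF k] by simp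
qed

end

context cls2 begin

theorem part1:
  assumes onb: "onb_E p q p' es"
    and pr: "clprod p q (map es [0..<p']) = (\<lambda>A. \<sigma> * clprod p q (map std_basis [0..<p']) A)"
  shows "b_gen p q p' \<rho> Pr es s t = \<sigma> * bb s t"
proof -
  define w where "w = es 0"
  have p0: "0 < p'" using p'ge by simp
  have w0: "\<And>i. p' \<le> i \<Longrightarrow> w i = 0" using onb p0 unfolding onb_E_def subE_def w_def by blast
  have ww: "ip p q w w = 1" using onb p0 unfolding onb_E_def w_def by simp
  have cw: "cl_sq p k * w k = - w k" for k
    using clsqE[of k] w0[of k] by (cases "k < p'") auto
  define X where "X = clvec p q w"
  define R where "R = clprod p q (map es [1..<p'])"
  have "[0..<p'] = 0 # [1..<p']" using p0 upt_conv_Cons by auto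
  then have "clprod p q (map es [0..<p']) = X \<cdot> R" unfolding X_def R_def w_def clprod_def by simp
  then have XR: "X \<cdot> R = sm \<sigma> om" using pr unfolding om_def P_def sm_def by simp
  have hR: "hom p q R (p' - 1)" unfolding R_def using hom_clprod[of p q "map es [1..<p']"] by simp
  have XX: "X \<cdot> X = sm (-1) cl_one" unfolding X_def vec_sq ww by simp
  have "X \<cdot> (X \<cdot> R) = sm (-1) R"
    unfolding clmul_assoc[symmetric] XX clmul_sm_left clmul_one_left[OF hR] ..
  then have "sm (-1) R = sm \<sigma> (X \<cdot> om)" unfolding XR clmul_sm_right by simp
  then have "sm (-1) (sm (-1) R) = sm (-1) (sm \<sigma> (X \<cdot> om))" by simp
  then have RR: "R = sm (- \<sigma>) (X \<cdot> om)" by simp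
  have Xom: "X \<cdot> om = (\<lambda>C. \<Sum>i\<in>{..<n}. sm (w i) (ev i \<cdot> om) C)"
  proof -
    have a: "clmul p q (\<lambda>A. w i * bl {i} A) om C = sm (w i) (ev i \<cdot> om) C" for i C
      using clmul_sm_left[of p q "w i" "bl {i}" om] unfolding sm_def by metis
    show ?thesis unfolding X_def clvec_sum clmul_sum_left[OF finite_lessThan] a ..
  qed
  have EXom: "E (X \<cdot> om)"
  proof -
    have "hom p q (X \<cdot> om) (1 + p')" unfolding X_def using hom_clmul[OF hom_clvec hom_om] by blast
    moreover have "even (1 + p')" using p'odd p'ge by presburger
    ultimately show ?thesis using hom_mod by fastforce
  qed
  have rhoR: "\<rho> R s = (- \<sigma>) *\<^sub>R (\<Sum>i\<in>{..<n}. w i *\<^sub>R \<rho> (ev i \<cdot> om) s)"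
  proof -
    have "\<rho> (X \<cdot> om) s = (\<Sum>i\<in>{..<n}. \<rho> (sm (w i) (ev i \<cdot> om)) s)"
      unfolding Xom by (rule rho_sum) (auto intro: hom_sm E_evom)
    also have "\<dots> = (\<Sum>i\<in>{..<n}. w i *\<^sub>R \<rho> (ev i \<cdot> om) s)"
      by (intro sum.cong refl) (auto intro: rho_sm E_evom)
    finally show ?thesis unfolding RR rho_sm[OF EXom] by simp
  qed
  have PrR: "Pr (\<rho> R s) t k = - \<sigma> * (\<Sum>i\<in>{..<n}. w i * beta s t k i)" for k
    unfolding rhoR Pr_scale1 Pr_sum1[OF finite_lessThan] beta_def by simp
  have "b_gen p q p' \<rho> Pr es s t = ip p q w (Pr (\<rho> R s) t)"
    unfolding b_gen_def w_def R_def ..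
  also have "\<dots> = - (\<Sum>k\<in>{..<n}. cl_sq p k * w k * Pr (\<rho> R s) t k)" unfolding ip_as_clsq ..
  also have "\<dots> = - \<sigma> * (\<Sum>k\<in>{..<n}. \<Sum>i\<in>{..<n}. w k * w i * beta s t k i)"
    unfolding PrR cw by (simp add: sum_distrib_left sum_negf mult_ac)
  also have "(\<Sum>k\<in>{..<n}. \<Sum>i\<in>{..<n}. w k * w i * beta s t k i) = beta s t 0 0 * (\<Sum>k\<in>{..<n}. w k * w k)"
  proof (rule symsum)
    fix k i assume ki: "k \<in> {..<n}" "i \<in> {..<n}" "k \<noteq> i"
    show "w k * w i * (beta s t k i + beta s t i k) = 0"
    proof (cases "k < p' \<and> i < p'")
      case True then show ?thesis using beta_off[of k i s t] ki by simp
    next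
      case False then show ?thesis using w0 by auto
    qed
  next
    fix k assume "k \<in> {..<n}"
    show "w k * w k * beta s t k k = w k * w k * beta s t 0 0"
      using beta_dia[of k s t] w0[of k] by (cases "k < p'") auto
  qed simp
  also have "(\<Sum>k\<in>{..<n}. w k * w k) = 1"
  proof -
    have "ip p q w w = - (\<Sum>k\<in>{..<n}. cl_sq p k * w k * w k)" unfolding ip_as_clsq ..
    also have "\<dots> = (\<Sum>k\<in>{..<n}. w k * w k)" unfolding cw by (simp add: sum_negf)
    finally show ?thesis using ww by simp
  qed
  finally show ?thesis unfolding beta00 by simp
qed

end

lemma clprod_cons: "clprod p q (x # xs) = clmul p q (clvec p q x) (clprod p q xs)"
  unfolding clprod_def by simp

lemma clprod_append: "clprod p q (xs @ ys) = clmul p q (clprod p q xs) (clprod p q ys)"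
proof (induction xs)
  case Nil then show ?case
    using clmul_one_left[OF hom_clprod[of p q ys]] by (simp add: clprod_def)
next
  case (Cons x xs) then show ?case by (simp add: clprod_cons clmul_assoc)
qed

lemma clprod_single: "clprod p q [x] = clvec p q x"
  using clmul_one_right[OF hom_clvec[of p q x]] by (simp add: clprod_def)

lemma clmul_zero_left: "clmul p q (\<lambda>A. 0) y = (\<lambda>A. 0)"
proof
  fix C show "clmul p q (\<lambda>A. 0) y C = 0" unfolding clmul_def by (intro sum.neutral ballI) auto
qed

lemma hom01: "hom p q x 0 \<Longrightarrow> hom p q x 1 \<Longrightarrow> x = (\<lambda>A. 0)"
  unfolding hom_def by fastforce

definition cprod :: "nat \<Rightarrow> nat \<Rightarrow> vec list \<Rightarrow> real" where
  "cprod p q xs = prod_list (map (\<lambda>x. - ip p q x x) xs)"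

lemma clprod_inv:
  assumes "\<forall>x\<in>set xs. ip p q x x = 1 \<or> ip p q x x = -1"
  shows "clmul p q (clprod p q xs) (clprod p q (rev xs)) = sm (cprod p q xs) cl_one"
  using assms
proof (induction xs)
  case Nil then show ?case using clmul_one_left[OF hom_one] by (simp add: clprod_def cprod_def)
next
  case (Cons x xs)
  have "clmul p q (clprod p q (x # xs)) (clprod p q (rev (x # xs)))
      = clmul p q (clvec p q x) (clmul p q (clmul p q (clprod p q xs) (clprod p q (rev xs))) (clvec p q x))"
    unfolding rev.simps clprod_append clprod_single unfolding clprod_cons clmul_assoc ..
  also have "\<dots> = sm (cprod p q xs) (clmul p q (clvec p q x) (clvec p q x))"
    using Cons by (simp add: clmul_sm_left clmul_sm_right clmul_one_left[OF hom_clvec])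
  also have "\<dots> = sm (cprod p q (x # xs)) cl_one"
    unfolding vec_sq by (simp add: cprod_def mult.commute)
  finally show ?case .
qed

lemma cprod_pm: "\<forall>x\<in>set xs. ip p q x x = 1 \<or> ip p q x x = -1 \<Longrightarrow> cprod p q xs = 1 \<or> cprod p q xs = -1"
  by (induction xs) (auto simp: cprod_def)

lemma one_nonzero: "cl_one \<noteq> (\<lambda>A. 0)"
  unfolding cl_one_def by (metis zero_neq_one)

lemma spin_elts:
  assumes "g \<in> spin_grp p q S"
  obtains xs where "g = clprod p q xs" "\<forall>x\<in>set xs. x \<in> S \<and> (ip p q x x = 1 \<or> ip p q x x = -1)"
    "even (length xs)"
proof -
  obtain xs where g: "g = clprod p q xs" and xs: "\<forall>x\<in>set xs. x \<in> S \<and> (ip p q x x = 1 \<or> ip p q x x = -1)"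
    using assms unfolding spin_grp_def pin_grp_def by blast
  have "g \<in> cl_even p q" using assms unfolding spin_grp_def by blast
  then have ev: "hom p q g 0" using cl_even_hom by blast
  have "even (length xs)"
  proof (rule ccontr)
    assume "odd (length xs)"
    then have "length xs mod 2 = 1 mod 2" by (simp add: odd_iff_mod_2_eq_one)
    then have "hom p q g 1" unfolding g by (rule hom_mod[OF hom_clprod])
    then have "g = (\<lambda>A. 0)" using hom01 ev by blast
    then have "clmul p q g (clprod p q (rev xs)) = (\<lambda>A. 0)" by (simp add: clmul_zero_left)
    moreover have "clmul p q g (clprod p q (rev xs)) = sm (cprod p q xs) cl_one"
      unfolding g using clprod_inv xs by blast
    moreover have "sm (cprod p q xs) cl_one \<noteq> (\<lambda>A. 0)"
      using cprod_pm[of xs p q] xs one_nonzero unfolding sm_def by (auto simp: fun_eq_iff)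
    ultimately show False by simp
  qed
  then show ?thesis using that g xs by blast
qed


context cls2 begin

definition inb :: "vec \<Rightarrow> nat set \<Rightarrow> bool" where "inb x I \<longleftrightarrow> (\<forall>i. x i \<noteq> 0 \<longrightarrow> i \<in> I)"
definition blk :: "nat set \<Rightarrow> bool" where "blk I \<longleftrightarrow> I = {..<p'} \<or> I = {p'..<n}"

lemma blk_sub: "blk I \<Longrightarrow> i \<in> I \<Longrightarrow> i < n" unfolding blk_def using p'p by auto
lemma blk_eps: "blk I \<Longrightarrow> i \<in> I \<Longrightarrow> j \<in> I \<Longrightarrow> eps i j = -1" unfolding blk_def eps_def by auto

lemma swap_ij:
  assumes I: "blk I" "i \<in> I" "j \<in> I"
  shows "bb (\<rho> (ev i \<cdot> ev j) a) c = bb a (\<rho> (ev j \<cdot> ev i) c)"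
proof (cases "i = j")
  case True
  have i: "i < n" using blk_sub I by blast
  show ?thesis unfolding True ee_same[OF i[unfolded True]] rho_sm[OF hom_one] rho_one bb_scale1 bb_scale2 ..
next
  case False
  have ij: "i < n" "j < n" using blk_sub I by blast+
  have EY: "E (ev i \<cdot> ev j)" using ij by (intro hom_ee)
  have "bb (\<rho> (ev i \<cdot> ev j) a) c = - bb a (\<rho> (ev i \<cdot> ev j) c)"
    using elem[OF ij False] blk_eps[OF I] by simp
  also have "\<dots> = bb a (\<rho> (ev j \<cdot> ev i) c)"
    unfolding ee_anti[OF ij False] rho_neg[OF EY] bb_neg2 ..
  finally show ?thesis .
qed

lemma rho_double: "\<rho> (\<lambda>C. \<Sum>i\<in>{..<n}. \<Sum>j\<in>{..<n}. f i j * (ev i \<cdot> ev j) C) a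
    = (\<Sum>i\<in>{..<n}. \<Sum>j\<in>{..<n}. f i j *\<^sub>R \<rho> (ev i \<cdot> ev j) a)"
proof -
  let ?g = "\<lambda>i j. sm (f i j) (ev i \<cdot> ev j)"
  have Eg: "E (?g i j)" if "i < n" "j < n" for i j using that by (intro hom_sm hom_ee)
  have Ef: "E (\<lambda>A. \<Sum>j\<in>{..<n}. ?g i j A)" if "i < n" for i
    using that Eg by (intro hom_sum) auto
  have e: "(\<lambda>C. \<Sum>i\<in>{..<n}. \<Sum>j\<in>{..<n}. f i j * (ev i \<cdot> ev j) C) = (\<lambda>C. \<Sum>i\<in>{..<n}. \<Sum>j\<in>{..<n}. ?g i j C)"
    unfolding sm_def ..
  have "\<rho> (\<lambda>C. \<Sum>i\<in>{..<n}. \<Sum>j\<in>{..<n}. ?g i j C) a = (\<Sum>i\<in>{..<n}. \<rho> (\<lambda>A. \<Sum>j\<in>{..<n}. ?g i j A) a)"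
    using Ef by (intro rho_sum) auto
  also have "\<dots> = (\<Sum>i\<in>{..<n}. \<Sum>j\<in>{..<n}. \<rho> (?g i j) a)"
    using Eg by (intro sum.cong refl rho_sum) auto
  also have "\<dots> = (\<Sum>i\<in>{..<n}. \<Sum>j\<in>{..<n}. f i j *\<^sub>R \<rho> (ev i \<cdot> ev j) a)"
    using Eg by (intro sum.cong refl rho_sm) (auto intro: hom_ee)
  finally show ?thesis unfolding e .
qed

lemma adj_pair:
  assumes I: "blk I" and x: "inb x I" and y: "inb y I"
  shows "bb (\<rho> (clvec p q x \<cdot> clvec p q y) a) c = bb a (\<rho> (clvec p q y \<cdot> clvec p q x) c)"
proof -
  have "bb (\<rho> (clvec p q x \<cdot> clvec p q y) a) c = (\<Sum>i\<in>{..<n}. \<Sum>j\<in>{..<n}. (x i * y j) * bb (\<rho> (ev i \<cdot> ev j) a) c)"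
    unfolding clvec_mul_sum rho_double bb_sum1[OF finite_lessThan] bb_scale1 ..
  also have "\<dots> = (\<Sum>i\<in>{..<n}. \<Sum>j\<in>{..<n}. (y j * x i) * bb a (\<rho> (ev j \<cdot> ev i) c))"
  proof (intro sum.cong refl)
    fix i j
    show "(x i * y j) * bb (\<rho> (ev i \<cdot> ev j) a) c = (y j * x i) * bb a (\<rho> (ev j \<cdot> ev i) c)"
    proof (cases "x i = 0 \<or> y j = 0")
      case True then show ?thesis by auto
    next
      case False
      then have "i \<in> I" "j \<in> I" using x y unfolding inb_def by auto
      then show ?thesis using swap_ij[OF I] by simp
    qed
  qed
  also have "\<dots> = (\<Sum>j\<in>{..<n}. \<Sum>i\<in>{..<n}. (y j * x i) * bb a (\<rho> (ev j \<cdot> ev i) c))"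
    by (rule sum.swap)
  also have "\<dots> = bb a (\<rho> (clvec p q y \<cdot> clvec p q x) c)"
    unfolding clvec_mul_sum rho_double bb_sum2[OF finite_lessThan] bb_scale2 ..
  finally show ?thesis .
qed

lemma E_vv: "E (clvec p q x \<cdot> clvec p q y)"
  using hom_clmul[OF hom_clvec hom_clvec, of p q x y] hom_mod by fastforce

lemma inv_pair:
  assumes I: "blk I" and x: "inb x I" and y: "inb y I"
  shows "bb (\<rho> (clvec p q x \<cdot> clvec p q y) s) (\<rho> (clvec p q x \<cdot> clvec p q y) t) = ip p q x x * ip p q y y * bb s t"
proof -
  let ?X = "clvec p q x" and ?Y = "clvec p q y"
  have "bb (\<rho> (?X \<cdot> ?Y) s) (\<rho> (?X \<cdot> ?Y) t) = bb s (\<rho> (?Y \<cdot> ?X) (\<rho> (?X \<cdot> ?Y) t))"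
    by (rule adj_pair[OF I x y])
  also have "\<dots> = bb s (\<rho> ((?Y \<cdot> ?X) \<cdot> (?X \<cdot> ?Y)) t)" using rho_mul[OF E_vv E_vv] by simp
  also have "(?Y \<cdot> ?X) \<cdot> (?X \<cdot> ?Y) = sm (ip p q x x * ip p q y y) cl_one"
  proof -
    have "(?Y \<cdot> ?X) \<cdot> (?X \<cdot> ?Y) = ?Y \<cdot> ((?X \<cdot> ?X) \<cdot> ?Y)" by (simp add: clmul_assoc)
    also have "\<dots> = sm (- ip p q x x) (?Y \<cdot> ?Y)"
      unfolding vec_sq[of p q x] clmul_sm_left clmul_sm_right clmul_one_left[OF hom_clvec] ..
    also have "\<dots> = sm (ip p q x x * ip p q y y) cl_one" unfolding vec_sq by simp
    finally show ?thesis .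
  qed
  finally show ?thesis unfolding rho_sm[OF hom_one] rho_one bb_scale2 .
qed

lemma inv_list:
  assumes I: "blk I" and xs: "\<forall>x\<in>set xs. inb x I" and ev: "even (length xs)"
  shows "bb (\<rho> (clprod p q xs) s) (\<rho> (clprod p q xs) t) = prod_list (map (\<lambda>x. ip p q x x) xs) * bb s t"
  using xs ev
proof (induction xs arbitrary: s t rule: induct_list012)
  case 1 then show ?case by (simp add: clprod_def rho_one)
next
  case (2 x) then show ?case by simp
next
  case (3 x y zs)
  have Ez: "E (clprod p q zs)" using 3 hom_clprod[of p q zs] hom_mod by fastforce
  have e: "clprod p q (x # y # zs) = (clvec p q x \<cdot> clvec p q y) \<cdot> clprod p q zs"
    unfolding clprod_cons clmul_assoc ..
  have r: "\<rho> (clprod p q (x # y # zs)) w = \<rho> (clvec p q x \<cdot> clvec p q y) (\<rho> (clprod p q zs) w)" for w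
    unfolding e using rho_mul[OF E_vv Ez] .
  have "bb (\<rho> (clprod p q (x # y # zs)) s) (\<rho> (clprod p q (x # y # zs)) t)
      = ip p q x x * ip p q y y * bb (\<rho> (clprod p q zs) s) (\<rho> (clprod p q zs) t)"
    unfolding r using inv_pair[OF I] 3 by simp
  also have "\<dots> = ip p q x x * ip p q y y * (prod_list (map (\<lambda>x. ip p q x x) zs) * bb s t)"
    using 3 by simp
  finally show ?case by (simp add: mult_ac)
qed

lemma ipE_nonneg: "x \<in> subE p' \<Longrightarrow> ip p q x x \<ge> 0"
proof -
  assume x: "x \<in> subE p'"
  have "cl_sq p k * x k = - x k" for k
    using clsqE[of k] x unfolding subE_def by (cases "k < p'") auto
  then have "ip p q x x = (\<Sum>k\<in>{..<n}. x k * x k)" unfolding ip_as_clsq by (simp add: sum_negf)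
  then show ?thesis by (simp add: sum_nonneg)
qed

lemma prod_list_ones: "\<forall>x\<in>set xs. f x = (1::real) \<Longrightarrow> prod_list (map f xs) = 1"
  by (induction xs) auto

lemma prod_list_pm: "\<forall>x\<in>set xs. f x = (1::real) \<or> f x = -1 \<Longrightarrow> prod_list (map f xs) = 1 \<or> prod_list (map f xs) = -1"
  by (induction xs) auto

theorem inv_spinE:
  assumes g: "g \<in> spin_grp p q (subE p')"
  shows "bb (\<rho> g s) (\<rho> g t) = bb s t"
proof -
  obtain xs where g: "g = clprod p q xs" and xs: "\<forall>x\<in>set xs. x \<in> subE p' \<and> (ip p q x x = 1 \<or> ip p q x x = -1)"
    and ev: "even (length xs)" using spin_elts[OF g] by blast
  have I: "blk {..<p'}" unfolding blk_def by simp
  have inb: "\<forall>x\<in>set xs. inb x {..<p'}"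
  proof
    fix x assume "x \<in> set xs"
    then have h: "\<forall>i\<ge>p'. x i = 0" using xs unfolding subE_def by auto
    show "inb x {..<p'}" unfolding inb_def
    proof (intro allI impI)
      fix i assume "x i \<noteq> 0"
      then have "\<not> p' \<le> i" using h by blast
      then show "i \<in> {..<p'}" by simp
    qed
  qed
  have "\<forall>x\<in>set xs. ip p q x x = 1" using xs ipE_nonneg by fastforce
  then have "prod_list (map (\<lambda>x. ip p q x x) xs) = 1" by (rule prod_list_ones)
  then show ?thesis unfolding g using inv_list[OF I inb ev] by simp
qed

lemma pm_spinE':
  assumes g: "g \<in> spin_grp p q (subE' p' n)"
  shows "bb (\<rho> g s) (\<rho> g t) = bb s t \<or> bb (\<rho> g s) (\<rho> g t) = - bb s t"
proof -
  obtain xs where g: "g = clprod p q xs" and xs: "\<forall>x\<in>set xs. x \<in> subE' p' n \<and> (ip p q x x = 1 \<or> ip p q x x = -1)"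
    and ev: "even (length xs)" using spin_elts[OF g] by blast
  have I: "blk {p'..<n}" unfolding blk_def by simp
  have inb: "\<forall>x\<in>set xs. inb x {p'..<n}"
  proof
    fix x assume "x \<in> set xs"
    then have h: "\<forall>i\<ge>n. x i = 0" "\<forall>i<p'. x i = 0" using xs unfolding subE'_def in_V_def by auto
    show "inb x {p'..<n}" unfolding inb_def
    proof (intro allI impI)
      fix i assume "x i \<noteq> 0"
      then have "\<not> n \<le> i" "\<not> i < p'" using h by blast+
      then show "i \<in> {p'..<n}" by simp
    qed
  qed
  have "prod_list (map (\<lambda>x. ip p q x x) xs) = 1 \<or> prod_list (map (\<lambda>x. ip p q x x) xs) = -1"
    using xs by (intro prod_list_pm) auto
  then show ?thesis unfolding g using inv_list[OF I inb ev] by auto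
qed

end

context cls2 begin

definition Ue :: "nat set set" where "Ue = {A \<in> Pow {..<n}. even (card A)}"

lemma fin_Ue: "finite Ue" unfolding Ue_def by simp

lemma E_decomp: "E g \<Longrightarrow> g = (\<lambda>C. \<Sum>A\<in>Ue. sm (g A) (bl A) C)"
proof
  fix C assume g: "E g"
  show "g C = (\<Sum>A\<in>Ue. sm (g A) (bl A) C)"
  proof (cases "C \<in> Ue")
    case True
    have "(\<Sum>A\<in>Ue. sm (g A) (bl A) C) = (\<Sum>A\<in>Ue. if A = C then g C else 0)"
      by (rule sum.cong) (auto simp: sm_def bl_def)
    then show ?thesis using True fin_Ue by simp
  next
    case False
    then have "g C = 0" using g unfolding hom_def Ue_def by auto
    moreover have "(\<Sum>A\<in>Ue. sm (g A) (bl A) C) = 0"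
      using False by (intro sum.neutral) (auto simp: sm_def bl_def)
    ultimately show ?thesis by simp
  qed
qed

lemma E_bl: "A \<in> Ue \<Longrightarrow> E (bl A)" unfolding Ue_def by (intro hom_bl) auto

lemma phi_poly: "E g \<Longrightarrow> bb (\<rho> g s) (\<rho> g t) = (\<Sum>A\<in>Ue. \<Sum>B\<in>Ue. g A * g B * bb (\<rho> (bl A) s) (\<rho> (bl B) t))"
proof -
  assume g: "E g"
  have r: "\<rho> g w = (\<Sum>A\<in>Ue. g A *\<^sub>R \<rho> (bl A) w)" for w
  proof -
    have "\<rho> g w = \<rho> (\<lambda>C. \<Sum>A\<in>Ue. sm (g A) (bl A) C) w" using E_decomp[OF g] by metis
    also have "\<dots> = (\<Sum>A\<in>Ue. \<rho> (sm (g A) (bl A)) w)"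
      using fin_Ue by (rule rho_sum) (intro hom_sm E_bl)
    also have "\<dots> = (\<Sum>A\<in>Ue. g A *\<^sub>R \<rho> (bl A) w)"
      by (intro sum.cong refl rho_sm E_bl)
    finally show ?thesis .
  qed
  show ?thesis unfolding r unfolding bb_sum1[OF fin_Ue] bb_scale1 unfolding bb_sum2[OF fin_Ue] bb_scale2
    by (simp add: sum_distrib_left mult_ac)
qed

lemma psi_cont: "continuous_on S (\<lambda>g::cl. \<Sum>A\<in>Ue. \<Sum>B\<in>Ue. g A * g B * K A B)"
proof -
  have c: "continuous_on S (\<lambda>g::cl. g A)" for A
    by (rule continuous_on_subset[OF continuous_on_product_coordinates]) simp
  have "continuous_on S (\<lambda>g::cl. g A * g B * K A B)" for A B
    by (rule continuous_on_mult[OF continuous_on_mult[OF c c] continuous_on_const])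
  then show ?thesis by (intro continuous_on_sum)
qed

lemma spin_even: "g \<in> spin_grp p q S \<Longrightarrow> E g"
proof -
  assume "g \<in> spin_grp p q S"
  then have "g \<in> cl_even p q" unfolding spin_grp_def by simp
  then show ?thesis by (simp add: cl_even_hom)
qed

theorem inv_spin0:
  assumes g: "g \<in> spin0_grp p q (subE' p' n)"
  shows "bb (\<rho> g s) (\<rho> g t) = bb s t"
proof -
  define Sp where "Sp = spin_grp p q (subE' p' n)"
  define C where "C = connected_component_set Sp cl_one"
  define K where "K A B = bb (\<rho> (bl A) s) (\<rho> (bl B) t)" for A B
  define \<psi> where "\<psi> = (\<lambda>g::cl. \<Sum>A\<in>Ue. \<Sum>B\<in>Ue. g A * g B * K A B)"
  define b0 where "b0 = bb s t"
  have gC: "g \<in> C" using g unfolding C_def Sp_def spin0_grp_def by simp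
  have CS: "C \<subseteq> Sp" unfolding C_def by (rule connected_component_subset)
  have hS: "h \<in> spin_grp p q (subE' p' n)" if "h \<in> C" for h
    using CS that unfolding Sp_def by (rule subsetD)
  have psi: "\<psi> h = bb (\<rho> h s) (\<rho> h t)" if "h \<in> C" for h
    unfolding \<psi>_def K_def by (rule phi_poly[OF spin_even[OF hS[OF that]], symmetric])
  have pm: "\<psi> h = b0 \<or> \<psi> h = - b0" if "h \<in> C" for h
    unfolding psi[OF that] b0_def by (rule pm_spinE'[OF hS[OF that]])
  have oneS: "cl_one \<in> Sp"
  proof (rule ccontr)
    assume "cl_one \<notin> Sp"
    then have "C = {}" unfolding C_def by (rule connected_component_eq_empty[THEN iffD2])
    then show False using gC by simp
  qed
  have oneC: "cl_one \<in> C" unfolding C_def using oneS by simp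
  have psi1: "\<psi> cl_one = b0" unfolding psi[OF oneC] b0_def rho_one ..
  have conn: "connected (\<psi> ` C)"
    unfolding C_def by (rule connected_continuous_image[OF _ connected_connected_component])
      (unfold \<psi>_def, rule psi_cont)
  show ?thesis
  proof (rule ccontr)
    assume ne: "bb (\<rho> g s) (\<rho> g t) \<noteq> bb s t"
    have pg1: "\<psi> g = - b0" using pm[OF gC] psi[OF gC] ne b0_def by simp
    have pg2: "b0 \<noteq> 0" using pg1 psi[OF gC] ne b0_def by simp
    note pg = pg1 pg2
    have in1: "b0 \<in> \<psi> ` C" by (rule image_eqI[where f=\<psi>, OF psi1[symmetric] oneC])
    have in2: "- b0 \<in> \<psi> ` C" by (rule image_eqI[where f=\<psi>, OF pg(1)[symmetric] gC])
    have "0 \<in> \<psi> ` C"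
    proof (cases "b0 > 0")
      case True then show ?thesis using connectedD_interval[OF conn in2 in1, of 0] by simp
    next
      case False then show ?thesis using connectedD_interval[OF conn in1 in2, of 0] pg(2) by simp
    qed
    then obtain h where h: "0 = \<psi> h" "h \<in> C" by (rule imageE)
    then show False using pm[OF h(2)] pg(2) by simp
  qed
qed

definition invar where "invar g \<longleftrightarrow> (\<forall>s t. bb (\<rho> g s) (\<rho> g t) = bb s t)"

abbreviation "GG \<equiv> spin_grp p q (subE p') \<union> spin0_grp p q (subE' p' n)"

lemma G_spin: "h \<in> GG \<Longrightarrow> \<exists>S. h \<in> spin_grp p q S"
  unfolding spin0_grp_def using connected_component_subset by blast

lemma G_good: "h \<in> GG \<Longrightarrow> E h \<and> invar h"
  using G_spin spin_even inv_spinE inv_spin0 unfolding invar_def by blast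

lemma Ginv_good:
  assumes h: "h \<in> GG" and hg: "clmul p q h g = cl_one" and gh: "clmul p q g h = cl_one"
  shows "E (clmul p q g cl_one) \<and> invar (clmul p q g cl_one)"
proof -
  obtain S where hS: "h \<in> spin_grp p q S" using G_spin[OF h] by blast
  obtain xs where hx: "h = clprod p q xs" and xs: "\<forall>x\<in>set xs. x \<in> S \<and> (ip p q x x = 1 \<or> ip p q x x = -1)"
    and ev: "even (length xs)" using spin_elts[OF hS] by blast
  define c where "c = cprod p q xs"
  have cc: "c * c = 1" using cprod_pm[of xs p q] xs unfolding c_def by auto
  define hi where "hi = sm c (clprod p q (rev xs))"
  have Ehi: "E hi" unfolding hi_def using hom_clprod[of p q "rev xs"] ev hom_mod by (intro hom_sm) fastforce
  have hhi: "h \<cdot> hi = cl_one"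
    unfolding hi_def hx clmul_sm_right using clprod_inv[of xs p q] xs cc unfolding c_def by simp
  have "clmul p q g cl_one = clmul p q g (h \<cdot> hi)" unfolding hhi ..
  also have "\<dots> = hi" unfolding clmul_assoc[symmetric] gh clmul_one_left[OF Ehi] ..
  finally have ghi: "clmul p q g cl_one = hi" .
  have Eh: "E h" and ih: "invar h" using G_good[OF h] by auto
  have "invar hi" unfolding invar_def
  proof (intro allI)
    fix s t
    have "bb (\<rho> hi s) (\<rho> hi t) = bb (\<rho> h (\<rho> hi s)) (\<rho> h (\<rho> hi t))" using ih unfolding invar_def by simp
    also have "\<dots> = bb s t" using rho_mul[OF Eh Ehi, symmetric] unfolding hhi rho_one by simp
    finally show "bb (\<rho> hi s) (\<rho> hi t) = bb s t" .
  qed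
  then show ?thesis using ghi Ehi by simp
qed

lemma fold_good:
  assumes "\<forall>g\<in>set gs. g \<in> GG \<or> (\<exists>h\<in>GG. clmul p q h g = cl_one \<and> clmul p q g h = cl_one)"
  shows "E (foldr (clmul p q) gs cl_one) \<and> invar (foldr (clmul p q) gs cl_one)"
  using assms
proof (induction gs)
  case Nil then show ?case using hom_one rho_one unfolding invar_def by simp
next
  case (Cons g gs)
  define V where "V = foldr (clmul p q) gs cl_one"
  have EV: "E V" and iV: "invar V" using Cons unfolding V_def by auto
  have g': "E (clmul p q g cl_one) \<and> invar (clmul p q g cl_one)"
  proof -
    have "g \<in> GG \<or> (\<exists>h\<in>GG. clmul p q h g = cl_one \<and> clmul p q g h = cl_one)" using Cons by simp
    then show ?thesis
    proof
      assume "g \<in> GG"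
      then have "E g" "invar g" using G_good by auto
      then show ?thesis using clmul_one_right by metis
    next
      assume "\<exists>h\<in>GG. clmul p q h g = cl_one \<and> clmul p q g h = cl_one"
      then show ?thesis using Ginv_good by blast
    qed
  qed
  have e: "foldr (clmul p q) (g # gs) cl_one = clmul p q (clmul p q g cl_one) V"
    unfolding V_def foldr_Cons o_def clmul_assoc clmul_one_left[OF EV[unfolded V_def]] ..
  show ?case unfolding e
  proof
    show "E (clmul p q (clmul p q g cl_one) V)" using hom_clmul[OF conjunct1[OF g'] EV] by simp
    show "invar (clmul p q (clmul p q g cl_one) V)" unfolding invar_def
    proof (intro allI)
      fix s t
      have "\<rho> (clmul p q (clmul p q g cl_one) V) w = \<rho> (clmul p q g cl_one) (\<rho> V w)" for w
        using rho_mul[OF conjunct1[OF g'] EV] .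
      then show "bb (\<rho> (clmul p q (clmul p q g cl_one) V) s) (\<rho> (clmul p q (clmul p q g cl_one) V) t) = bb s t"
        using g' iV unfolding invar_def by simp
    qed
  qed
qed

theorem inv_K: "g \<in> K_grp p q p' \<Longrightarrow> bb (\<rho> g s) (\<rho> g t) = bb s t"
  unfolding K_grp_def gen_grp_def using fold_good unfolding invar_def by blast

end

context cls2 begin

lemma bcan_eq: "b_can p q p' \<rho> Pr = bb"
  by (intro ext) (rule bb_can)

lemma all_parts:
  shows "(\<forall>es \<sigma>. onb_E p q p' es \<and> (\<sigma> = 1 \<or> \<sigma> = -1) \<and>
        clprod p q (map es [0..<p']) = (\<lambda>A. \<sigma> * clprod p q (map std_basis [0..<p']) A)
        \<longrightarrow> (\<forall>s t. b_gen p q p' \<rho> Pr es s t = \<sigma> * b_can p q p' \<rho> Pr s t))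
   \<and> (\<forall>s t. b_can p q p' \<rho> Pr s t = b_can p q p' \<rho> Pr t s)
   \<and> (\<forall>g\<in>K_grp p q p'. \<forall>s t. b_can p q p' \<rho> Pr (\<rho> g s) (\<rho> g t) = b_can p q p' \<rho> Pr s t)
   \<and> (\<forall>c. (\<forall>i j. c i j \<noteq> 0 \<longrightarrow> (i < p' \<and> p' \<le> j \<and> j < p + q) \<or> (p' \<le> i \<and> i < p + q \<and> j < p'))
        \<longrightarrow> (\<forall>s t. b_can p q p' \<rho> Pr (\<rho> (spin_elt p q c) s) t = b_can p q p' \<rho> Pr s (\<rho> (spin_elt p q c) t)))
   \<and> (\<forall>c. (\<forall>i j. c i j \<noteq> 0 \<longrightarrow> (i < p' \<and> j < p') \<or> (p' \<le> i \<and> i < p + q \<and> p' \<le> j \<and> j < p + q))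
        \<longrightarrow> (\<forall>s t. b_can p q p' \<rho> Pr (\<rho> (spin_elt p q c) s) t = - b_can p q p' \<rho> Pr s (\<rho> (spin_elt p q c) t)))"
  unfolding bcan_eq
proof (intro conjI)
  show "\<forall>es \<sigma>. onb_E p q p' es \<and> (\<sigma> = 1 \<or> \<sigma> = -1) \<and>
        clprod p q (map es [0..<p']) = (\<lambda>A. \<sigma> * clprod p q (map std_basis [0..<p']) A)
        \<longrightarrow> (\<forall>s t. b_gen p q p' \<rho> Pr es s t = \<sigma> * bb s t)"
    using part1 by blast
  show "\<forall>s t. bb s t = bb t s" using bb_sym by blast
  show "\<forall>g\<in>K_grp p q p'. \<forall>s t. bb (\<rho> g s) (\<rho> g t) = bb s t" using inv_K by blast
  show "\<forall>c. (\<forall>i j. c i j \<noteq> 0 \<longrightarrow> (i < p' \<and> p' \<le> j \<and> j < p + q) \<or> (p' \<le> i \<and> i < p + q \<and> j < p'))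
        \<longrightarrow> (\<forall>s t. bb (\<rho> (spin_elt p q c) s) t = bb s (\<rho> (spin_elt p q c) t))"
  proof (intro allI impI)
    fix c :: "nat \<Rightarrow> nat \<Rightarrow> real" and s t
    assume c: "\<forall>i j. c i j \<noteq> 0 \<longrightarrow> (i < p' \<and> p' \<le> j \<and> j < p + q) \<or> (p' \<le> i \<and> i < p + q \<and> j < p')"
    have "\<forall>i<n. \<forall>j<n. c i j \<noteq> 0 \<longrightarrow> i \<noteq> j \<longrightarrow> eps i j = 1"
    proof (intro allI impI)
      fix i j assume "i < n" "j < n" "c i j \<noteq> 0" "i \<noteq> j"
      then have "(i < p' \<and> p' \<le> j \<and> j < p + q) \<or> (p' \<le> i \<and> i < p + q \<and> j < p')" using c by blast
      then show "eps i j = 1" unfolding eps_def by auto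
    qed
    then show "bb (\<rho> (spin_elt p q c) s) t = bb s (\<rho> (spin_elt p q c) t)" using gen4[of c 1] by simp
  qed
  show "\<forall>c. (\<forall>i j. c i j \<noteq> 0 \<longrightarrow> (i < p' \<and> j < p') \<or> (p' \<le> i \<and> i < p + q \<and> p' \<le> j \<and> j < p + q))
        \<longrightarrow> (\<forall>s t. bb (\<rho> (spin_elt p q c) s) t = - bb s (\<rho> (spin_elt p q c) t))"
  proof (intro allI impI)
    fix c :: "nat \<Rightarrow> nat \<Rightarrow> real" and s t
    assume c: "\<forall>i j. c i j \<noteq> 0 \<longrightarrow> (i < p' \<and> j < p') \<or> (p' \<le> i \<and> i < p + q \<and> p' \<le> j \<and> j < p + q)"
    have "\<forall>i<n. \<forall>j<n. c i j \<noteq> 0 \<longrightarrow> i \<noteq> j \<longrightarrow> eps i j = -1"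
    proof (intro allI impI)
      fix i j assume "i < n" "j < n" "c i j \<noteq> 0" "i \<noteq> j"
      then have "(i < p' \<and> j < p') \<or> (p' \<le> i \<and> i < p + q \<and> p' \<le> j \<and> j < p + q)" using c by blast
      then show "eps i j = -1" unfolding eps_def by auto
    qed
    then show "bb (\<rho> (spin_elt p q c) s) t = - bb s (\<rho> (spin_elt p q c) t)" using gen4[of c "-1"] by simp
  qed
qed

end

theorem mainTheorem1:
  fixes p' p'' q :: nat
    and \<rho> :: "cl \<Rightarrow> 'w::real_vector \<Rightarrow> 'w"
    and Pr :: "'w \<Rightarrow> 'w \<Rightarrow> vec"
  defines "p \<equiv> p' + p''"
  defines "n \<equiv> p' + p'' + q"
  defines "b \<equiv> b_can (p' + p'') q p' \<rho> Pr"
  assumes module: "cl0_module p q \<rho>"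
    and equiv: "equivariant_pairing p q \<rho> Pr"
    and p'_mod: "p' mod 4 = 3"
  shows
    "(\<forall>es \<sigma>. onb_E p q p' es \<and> (\<sigma> = 1 \<or> \<sigma> = -1) \<and>
        clprod p q (map es [0..<p']) = (\<lambda>A. \<sigma> * clprod p q (map std_basis [0..<p']) A)
        \<longrightarrow> (\<forall>s t. b_gen p q p' \<rho> Pr es s t = \<sigma> * b s t))
   \<and> (\<forall>s t. b s t = b t s)
   \<and> (\<forall>g\<in>K_grp p q p'. \<forall>s t. b (\<rho> g s) (\<rho> g t) = b s t)
   \<and> (\<forall>c. (\<forall>i j. c i j \<noteq> 0 \<longrightarrow> (i < p' \<and> p' \<le> j \<and> j < n) \<or> (p' \<le> i \<and> i < n \<and> j < p'))
        \<longrightarrow> (\<forall>s t. b (\<rho> (spin_elt p q c) s) t = b s (\<rho> (spin_elt p q c) t)))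
   \<and> (\<forall>c. (\<forall>i j. c i j \<noteq> 0 \<longrightarrow> (i < p' \<and> j < p') \<or> (p' \<le> i \<and> i < n \<and> p' \<le> j \<and> j < n))
        \<longrightarrow> (\<forall>s t. b (\<rho> (spin_elt p q c) s) t = - b s (\<rho> (spin_elt p q c) t)))"
proof -
  have c: "cls2 p q \<rho> Pr p'"
  proof (intro cls2.intro cls.intro cls2_axioms.intro)
    show "cl0_module p q \<rho>" by (rule module)
    show "equivariant_pairing p q \<rho> Pr" by (rule equiv)
    show "p' mod 4 = 3" by (rule p'_mod)
    show "p' \<le> p" unfolding p_def by simp
  qed
  have nn: "n = p + q" unfolding n_def p_def by simp
  have bb: "b = b_can p q p' \<rho> Pr" unfolding b_def p_def ..
  show ?thesis unfolding nn bb by (rule cls2.all_parts[OF c])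
qed


end
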